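(* Let $\pi$ be a finitely refining sequence of partitions of $[0,1]$ and $W$ a standard Brownian motion on $[0,1]$. Define $\eta_{m,k}=\frac{(W(t_2)-W(t_1))(t_3-t_2)-(W(t_3)-W(t_2))(t_2-t_1)}{\sqrt{(t_2-t_1)(t_3-t_2)(t_3-t_1)}}$ with $t_j=t^{m,k}_j$. Then almost surely $$W(t)=W(0)+(W(1)-W(0))t+\sum_{m=0}^\infty\sum_{k=0}^{N(\pi^{m+1})-N(\pi^m)-1}\eta_{m,k}e^\pi_{m,k}(t)\quad\text{for all }t\in[0,1],$$ and the random variables $\{\eta_{m,k}\}_{m,k}$ are independent and identically distributed with law $\mathcal N(0,1)$.
   Context: A partition of $[0,1]$ is a finite set $\{0=t_0<t_1<\dots<t_N=1\}$; for a partition $\pi^n=\{0=t^n_0<\dots<t^n_{N(\pi^n)}=1\}$, $N(\pi^n)$ is its number of intervals and $|\pi^n|=\max_i(t^n_{i+1}-t^n_i)$. A sequence $\pi=(\pi^n)_{n\ge0}$ of partitions of $[0,1]$, with the convention $\pi^0=\{0,1\}$, is finitely refining if $\pi^n\subseteq\pi^{n+1}$ for all $n$, $|\pi^n|\to0$, and there is $M<\infty$ such that for every $n$ each interval $[t^n_i,t^n_{i+1}]$ contains at most $M$ points of $\pi^{n+1}$. Haar and Schauder functions of a finitely refining $\pi$: for each level $m\ge0$ and each interval $[u_0,u_r]$ of $\pi^m$, let $u_0<u_1<\dots<u_r$ be the points of $\pi^{m+1}$ lying in $[u_0,u_r]$. For each $i\in\{2,\dots,r\}$ put $t_1=u_0$,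 $t_2=u_{i-1}$, $t_3=u_i$ and define $\psi(s)=\sqrt{\frac{t_3-t_2}{(t_2-t_1)(t_3-t_1)}}$ for $s\in[t_1,t_2)$, $\psi(s)=-\sqrt{\frac{t_2-t_1}{(t_3-t_2)(t_3-t_1)}}$ for $s\in[t_2,t_3)$, $\psi(s)=0$ otherwise, and $e(t)=\int_0^t\psi(s)\,ds$ (a continuous hat function vanishing outside $[t_1,t_3]$, affine on $[t_1,t_2]$ and on $[t_2,t_3]$, maximal at $t_2$). Ranging over all intervals of $\pi^m$ and all such $i$ gives $N(\pi^{m+1})-N(\pi^m)$ functions at level $m$, enumerated in a fixed order as $\psi_{m,k}$, $e^\pi_{m,k}$, $k=0,\dots,N(\pi^{m+1})-N(\pi^m)-1$, with associated points $t^{m,k}_1<t^{m,k}_2<t^{m,k}_3$ (so $[t^{m,k}_1,t^{m,k}_3]$ is the support of $e^\pi_{m,k}$ and $t^{m,k}_2$ its maximum point). *)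

theory Defs
  imports "HOL-Probability.Probability"
begin

definition consecutive :: "real set \<Rightarrow> real \<Rightarrow> real \<Rightarrow> bool" where
  "consecutive P a b \<longleftrightarrow> a \<in> P \<and> b \<in> P \<and> a < b \<and> {a<..<b} \<inter> P = {}"

definition is_partition :: "real set \<Rightarrow> bool" where
  "is_partition P \<longleftrightarrow> finite P \<and> P \<subseteq> {0..1} \<and> 0 \<in> P \<and> 1 \<in> P"

definition mesh :: "real set \<Rightarrow> real" where
  "mesh P = Max {b - a | a b. consecutive P a b}"

definition finitely_refining :: "(nat \<Rightarrow> real set) \<Rightarrow> bool" where
  "finitely_refining \<pi> \<longleftrightarrow>
     \<pi> 0 = {0, 1} \<and>
     (\<forall>n. is_partition (\<pi> n)) \<and>
     (\<forall>n. \<pi> n \<subseteq> \<pi> (Suc n)) \<and>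
     (\<lambda>n. mesh (\<pi> n)) \<longlonglongrightarrow> 0 \<and>
     (\<exists>M::nat. \<forall>n a b. consecutive (\<pi> n) a b \<longrightarrow> card (\<pi> (Suc n) \<inter> {a..b}) \<le> M)"

text \<open>Level-m index set of the Haar/Schauder system: triples (t1,t2,t3) with
  t1 = u0 the left end of an interval [u0,ur] of pi m, t2 = u(i-1), t3 = u(i),
  consecutive points of pi(m+1) inside [u0,ur], 2 \<le> i \<le> r.\<close>
definition schauder_triples :: "(nat \<Rightarrow> real set) \<Rightarrow> nat \<Rightarrow> (real \<times> real \<times> real) set" where
  "schauder_triples \<pi> m = {(t1, t2, t3). \<exists>ur. consecutive (\<pi> m) t1 ur \<and>
       t1 < t2 \<and> t2 < ur \<and> t2 \<in> \<pi> (Suc m) \<and> consecutive (\<pi> (Suc m)) t2 t3 \<and> t3 \<le> ur}"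

definition haar_fun :: "real \<times> real \<times> real \<Rightarrow> real \<Rightarrow> real" where
  "haar_fun tr s = (case tr of (t1, t2, t3) \<Rightarrow>
     if t1 \<le> s \<and> s < t2 then sqrt ((t3 - t2) / ((t2 - t1) * (t3 - t1)))
     else if t2 \<le> s \<and> s < t3 then - sqrt ((t2 - t1) / ((t3 - t2) * (t3 - t1)))
     else 0)"

definition schauder_fun :: "real \<times> real \<times> real \<Rightarrow> real \<Rightarrow> real" where
  "schauder_fun tr t = integral {0..t} (haar_fun tr)"

definition eta :: "(real \<Rightarrow> 'a \<Rightarrow> real) \<Rightarrow> real \<times> real \<times> real \<Rightarrow> 'a \<Rightarrow> real" where
  "eta W tr \<omega> = (case tr of (t1, t2, t3) \<Rightarrow>
     ((W t2 \<omega> - W t1 \<omega>) * (t3 - t2) - (W t3 \<omega> - W t2 \<omega>) * (t2 - t1))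
       / sqrt ((t2 - t1) * (t3 - t2) * (t3 - t1)))"

definition brownian_motion :: "'a measure \<Rightarrow> (real \<Rightarrow> 'a \<Rightarrow> real) \<Rightarrow> bool" where
  "brownian_motion M W \<longleftrightarrow>
     prob_space M \<and>
     (\<forall>t\<in>{0..1}. W t \<in> borel_measurable M) \<and>
     (AE \<omega> in M. W 0 \<omega> = 0) \<and>
     (AE \<omega> in M. continuous_on {0..1} (\<lambda>t. W t \<omega>)) \<and>
     (\<forall>s t. 0 \<le> s \<and> s < t \<and> t \<le> 1 \<longrightarrow>
        distributed M lborel (\<lambda>\<omega>. W t \<omega> - W s \<omega>) (normal_density 0 (sqrt (t - s)))) \<and>
     (\<forall>(n::nat) (ts::nat \<Rightarrow> real). 0 \<le> ts 0 \<and> (\<forall>i<n. ts i < ts (Suc i)) \<and> ts n \<le> 1 \<longrightarrow>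
        prob_space.indep_vars M (\<lambda>_. borel) (\<lambda>i \<omega>. W (ts (Suc i)) \<omega> - W (ts i) \<omega>) {..<n})"

end

theory Submission
  imports Defs
begin

lemma lborel_reflect_nn:
  fixes c s :: real and g :: "real \<times> real \<Rightarrow> ennreal"
  assumes cs: "c\<^sup>2 + s\<^sup>2 = 1" and s: "s \<noteq> 0" and g[measurable]: "g \<in> borel_measurable borel"
  shows "(\<integral>\<^sup>+x. \<integral>\<^sup>+y. g (c * x+s * y, s * x-c * y) \<partial>lborel \<partial>lborel) = (\<integral>\<^sup>+u. \<integral>\<^sup>+v. g (u, v) \<partial>lborel \<partial>lborel)"
proof -
  have "(\<integral>\<^sup>+x. \<integral>\<^sup>+y. g (c * x+s * y, s * x-c * y) \<partial>lborel \<partial>lborel)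
      = (\<integral>\<^sup>+x. ennreal (1/\<bar>s\<bar>) * (\<integral>\<^sup>+u. g (u, (x - c * u)/s) \<partial>lborel) \<partial>lborel)"
  proof (rule nn_integral_cong)
    fix x
    have m: "(\<lambda>u. g (u, (x - c * u)/s)) \<in> borel_measurable borel" by measurable
    have "(\<integral>\<^sup>+u. g (u, (x - c * u)/s) \<partial>lborel) = \<bar>s\<bar> * (\<integral>\<^sup>+y. g (c * x + s * y, (x - c * (c * x+s * y))/s) \<partial>lborel)"
      using nn_integral_real_affine[OF m s, of "c * x"] by simp
    also have "(\<lambda>y. (x - c * (c * x+s * y))/s) = (\<lambda>y. s * x-c * y)"
    proof
      fix y
      have "x - c * (c * x+s * y) = x * (1 - c\<^sup>2) - c * s * y" by (simp add: algebra_simps power2_eq_square)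
      also have "\<dots> = x * s\<^sup>2 - c * s * y" using cs by (metis add_diff_cancel_left')
      also have "\<dots> = s * (s * x - c * y)" by (simp add: algebra_simps power2_eq_square)
      finally show "(x - c * (c * x+s * y))/s = s * x-c * y" using s by simp
    qed
    finally have IJ: "(\<integral>\<^sup>+u. g (u, (x - c * u)/s) \<partial>lborel) = \<bar>s\<bar> * (\<integral>\<^sup>+y. g (c * x+s * y, s * x-c * y) \<partial>lborel)" .
    then show "(\<integral>\<^sup>+y. g (c * x+s * y, s * x-c * y) \<partial>lborel) = ennreal (1/\<bar>s\<bar>) * (\<integral>\<^sup>+u. g (u, (x - c * u)/s) \<partial>lborel)"
    proof -
      have "ennreal (1/\<bar>s\<bar>) * ennreal \<bar>s\<bar> = 1"
        using s by (simp add: ennreal_mult'[symmetric])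
      then show ?thesis unfolding IJ
        by (simp add: mult.assoc[symmetric])
    qed
  qed
  also have "\<dots> = ennreal (1/\<bar>s\<bar>) * (\<integral>\<^sup>+x. \<integral>\<^sup>+u. g (u, (x - c * u)/s) \<partial>lborel \<partial>lborel)"
    by (rule nn_integral_cmult) measurable
  also have "(\<integral>\<^sup>+x. \<integral>\<^sup>+u. g (u, (x - c * u)/s) \<partial>lborel \<partial>lborel) = (\<integral>\<^sup>+u. \<integral>\<^sup>+x. g (u, (x - c * u)/s) \<partial>lborel \<partial>lborel)"
    by (rule lborel_pair.Fubini') measurable
  also have "\<dots> = (\<integral>\<^sup>+u. ennreal \<bar>s\<bar> * \<integral>\<^sup>+v. g (u, v) \<partial>lborel \<partial>lborel)"
  proof (rule nn_integral_cong)
    fix u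
    have m: "(\<lambda>x. g (u, x)) \<in> borel_measurable borel" by measurable
    show "(\<integral>\<^sup>+x. g (u, (x - c * u)/s) \<partial>lborel) = ennreal \<bar>s\<bar> * \<integral>\<^sup>+v. g (u, v) \<partial>lborel"
    proof -
      have m2: "(\<lambda>x. g (u, (x - c * u)/s)) \<in> borel_measurable borel" by measurable
      have "(\<integral>\<^sup>+x. g (u, (x - c * u)/s) \<partial>lborel) = \<bar>s\<bar> * (\<integral>\<^sup>+v. g (u, ((c * u + s * v) - c * u)/s) \<partial>lborel)"
        using nn_integral_real_affine[OF m2 s, of "c * u"] by simp
      also have "(\<lambda>v. ((c * u + s * v) - c * u)/s) = (\<lambda>v. v)" using s by auto
      finally show ?thesis by simp
    qed
  qed
  also have "\<dots> = ennreal \<bar>s\<bar> * (\<integral>\<^sup>+u. \<integral>\<^sup>+v. g (u, v) \<partial>lborel \<partial>lborel)"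
    by (rule nn_integral_cmult) measurable
  finally show ?thesis using s
    by (simp add: mult.assoc[symmetric] ennreal_mult'[symmetric])
qed

lemma std_normal_reflect:
  fixes c s x y :: real assumes cs: "c\<^sup>2 + s\<^sup>2 = 1"
  shows "std_normal_density (c * x + s * y) * std_normal_density (s * x - c * y) = std_normal_density x * std_normal_density y"
proof -
  have "(c * x + s * y)\<^sup>2 + (s * x - c * y)\<^sup>2 = (c\<^sup>2 + s\<^sup>2) * x\<^sup>2 + (c\<^sup>2 + s\<^sup>2) * y\<^sup>2"
    by (simp add: algebra_simps power2_eq_square)
  then have e: "(c * x + s * y)\<^sup>2 + (s * x - c * y)\<^sup>2 = x\<^sup>2 + y\<^sup>2" using cs by simp
  have "std_normal_density (c * x + s * y) * std_normal_density (s * x - c * y)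
      = (1 / sqrt (2 * pi)) * (1 / sqrt (2 * pi)) * exp (- ((c * x + s * y)\<^sup>2 + (s * x - c * y)\<^sup>2) / 2)"
    unfolding std_normal_density_def by (simp add: exp_add[symmetric] add_divide_distrib diff_divide_distrib)
  also have "\<dots> = (1 / sqrt (2 * pi)) * (1 / sqrt (2 * pi)) * exp (- (x\<^sup>2 + y\<^sup>2) / 2)" unfolding e ..
  also have "\<dots> = std_normal_density x * std_normal_density y"
    unfolding std_normal_density_def by (simp add: exp_add[symmetric] add_divide_distrib diff_divide_distrib)
  finally show ?thesis .
qed

lemma distr_std_normal_pair_reflect:
  fixes c s :: real
  assumes cs: "c\<^sup>2 + s\<^sup>2 = 1" and s: "s \<noteq> 0"
  defines "\<Phi> \<equiv> (\<lambda>(x::real, y::real). ennreal (std_normal_density x * std_normal_density y))"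
  shows "distr (density (lborel \<Otimes>\<^sub>M lborel) \<Phi>) (lborel \<Otimes>\<^sub>M lborel) (\<lambda>(x, y). (c * x + s * y, s * x - c * y))
         = density (lborel \<Otimes>\<^sub>M lborel) \<Phi>"
proof (rule measure_eqI)
  show "sets (distr (density (lborel \<Otimes>\<^sub>M lborel) \<Phi>) (lborel \<Otimes>\<^sub>M lborel) (\<lambda>(x, y). (c * x + s * y, s * x - c * y)))
        = sets (density (lborel \<Otimes>\<^sub>M lborel) \<Phi>)" by simp
  fix A assume "A \<in> sets (distr (density (lborel \<Otimes>\<^sub>M lborel) \<Phi>) (lborel \<Otimes>\<^sub>M lborel) (\<lambda>(x, y). (c * x + s * y, s * x - c * y)))"
  then have A: "A \<in> sets (borel \<Otimes>\<^sub>M borel)" by simp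
  have Am[measurable]: "A \<in> sets borel" using A by (metis borel_prod)
  have Phim2: "\<Phi> \<in> borel_measurable (borel \<Otimes>\<^sub>M borel)" unfolding \<Phi>_def by measurable
  then have Phim[measurable]: "\<Phi> \<in> borel_measurable borel" by (metis borel_prod)
  have R[measurable]: "(\<lambda>(x::real, y::real). (c * x + s * y, s * x - c * y)) \<in> measurable (lborel \<Otimes>\<^sub>M lborel) (lborel \<Otimes>\<^sub>M lborel)"
    by measurable
  let ?g = "\<lambda>z. \<Phi> z * indicator A z"
  have gm: "?g \<in> borel_measurable borel" by measurable
  have "emeasure (distr (density (lborel \<Otimes>\<^sub>M lborel) \<Phi>) (lborel \<Otimes>\<^sub>M lborel) (\<lambda>(x, y). (c * x + s * y, s * x - c * y))) A
      = (\<integral>\<^sup>+z. \<Phi> z * indicator A ((\<lambda>(x, y). (c * x + s * y, s * x - c * y)) z) \<partial>(lborel \<Otimes>\<^sub>M lborel))"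
  proof -
    have A': "A \<in> sets (lborel \<Otimes>\<^sub>M lborel)" using A by simp
    have Rm: "(\<lambda>(x::real, y::real). (c * x + s * y, s * x - c * y)) \<in> measurable (density (lborel \<Otimes>\<^sub>M lborel) \<Phi>) (lborel \<Otimes>\<^sub>M lborel)"
      using R by simp
    have "emeasure (distr (density (lborel \<Otimes>\<^sub>M lborel) \<Phi>) (lborel \<Otimes>\<^sub>M lborel) (\<lambda>(x, y). (c * x + s * y, s * x - c * y))) A
      = emeasure (density (lborel \<Otimes>\<^sub>M lborel) \<Phi>) ((\<lambda>(x, y). (c * x + s * y, s * x - c * y)) -` A \<inter> space (density (lborel \<Otimes>\<^sub>M lborel) \<Phi>))"
      by (rule emeasure_distr[OF Rm A'])
    also have "\<dots> = (\<integral>\<^sup>+z. \<Phi> z * indicator ((\<lambda>(x, y). (c * x + s * y, s * x - c * y)) -` A \<inter> space (density (lborel \<Otimes>\<^sub>M lborel) \<Phi>)) z \<partial>(lborel \<Otimes>\<^sub>M lborel))"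
      using Phim2 measurable_sets[OF R A'] by (intro emeasure_density) auto
    finally show ?thesis
      by (simp add: space_pair_measure) (auto intro!: nn_integral_cong split: split_indicator)
  qed
  also have "\<dots> = (\<integral>\<^sup>+x. \<integral>\<^sup>+y. ?g (c * x + s * y, s * x - c * y) \<partial>lborel \<partial>lborel)"
    by (subst lborel.nn_integral_fst[symmetric]) (auto simp: \<Phi>_def std_normal_reflect[OF cs] intro!: nn_integral_cong)
  also have "\<dots> = (\<integral>\<^sup>+u. \<integral>\<^sup>+v. ?g (u, v) \<partial>lborel \<partial>lborel)"
    by (rule lborel_reflect_nn[OF cs s gm])
  also have "\<dots> = emeasure (density (lborel \<Otimes>\<^sub>M lborel) \<Phi>) A"
  proof -
    have gm2: "?g \<in> borel_measurable (lborel \<Otimes>\<^sub>M lborel)"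
      using Phim2 A by (simp add: borel_measurable_times)
    have A': "A \<in> sets (lborel \<Otimes>\<^sub>M lborel)" using A by simp
    show ?thesis using A' gm2 Phim2
      by (subst lborel.nn_integral_fst[OF gm2]) (simp add: emeasure_density)
  qed
  finally show "emeasure (distr (density (lborel \<Otimes>\<^sub>M lborel) \<Phi>) (lborel \<Otimes>\<^sub>M lborel) (\<lambda>(x, y). (c * x + s * y, s * x - c * y))) A
      = emeasure (density (lborel \<Otimes>\<^sub>M lborel) \<Phi>) A" .
qed

lemma distr_lborel_borel: "distr M lborel f = distr M borel f"
  by (simp add: distr_def)

lemma distr_lborel2_borel2: "distr M (lborel \<Otimes>\<^sub>M lborel) f = distr M (borel \<Otimes>\<^sub>M borel) f"
  unfolding distr_def by (simp add: space_pair_measure)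

lemma (in prob_space) indep_var_lborel_iff: "indep_var lborel X lborel Y \<longleftrightarrow> indep_var borel X borel Y"
  unfolding indep_var_def indep_vars_def2
  by (intro conj_cong indep_sets_cong refl ball_cong) (auto split: bool.split)

lemma (in prob_space) gauss_reflect_indep:
  fixes X Y :: "'a \<Rightarrow> real"
  assumes X: "distributed M lborel X std_normal_density" and Y: "distributed M lborel Y std_normal_density"
    and XY: "indep_var borel X borel Y" and cs: "c\<^sup>2 + s\<^sup>2 = 1" and s: "s \<noteq> 0"
  shows "indep_var borel (\<lambda>\<omega>. c * X \<omega> + s * Y \<omega>) borel (\<lambda>\<omega>. s * X \<omega> - c * Y \<omega>)"
    and "distributed M lborel (\<lambda>\<omega>. s * X \<omega> - c * Y \<omega>) std_normal_density"
    and "distributed M lborel (\<lambda>\<omega>. c * X \<omega> + s * Y \<omega>) std_normal_density"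
proof -
  define \<Phi> where "\<Phi> = (\<lambda>(x::real, y::real). ennreal (std_normal_density x * std_normal_density y))"
  have Xm[measurable]: "X \<in> borel_measurable M" using distributed_measurable[OF X] by simp
  have Ym[measurable]: "Y \<in> borel_measurable M" using distributed_measurable[OF Y] by simp
  have XYl: "indep_var lborel X lborel Y" using XY indep_var_lborel_iff[of X Y] by simp
  have J: "distributed M (lborel \<Otimes>\<^sub>M lborel) (\<lambda>x. (X x, Y x)) (\<lambda>(x, y). ennreal (std_normal_density x) * ennreal (std_normal_density y))"
    by (rule distributed_joint_indep[OF _ _ X Y XYl]) (simp_all add: lborel.sigma_finite_measure_axioms)
  have "(\<lambda>(x, y). ennreal (std_normal_density x) * ennreal (std_normal_density y)) = \<Phi>"
    by (auto simp: \<Phi>_def ennreal_mult)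
  then have D: "distr M (lborel \<Otimes>\<^sub>M lborel) (\<lambda>x. (X x, Y x)) = density (lborel \<Otimes>\<^sub>M lborel) \<Phi>"
    using distributed_distr_eq_density[OF J] by simp
  let ?R = "\<lambda>(x::real, y::real). (c * x + s * y, s * x - c * y)"
  have Rm: "?R \<in> measurable (lborel \<Otimes>\<^sub>M lborel) (lborel \<Otimes>\<^sub>M lborel)" by measurable
  have XYm: "(\<lambda>x. (X x, Y x)) \<in> measurable M (lborel \<Otimes>\<^sub>M lborel)" by measurable
  have UV: "distr M (lborel \<Otimes>\<^sub>M lborel) (\<lambda>\<omega>. (c * X \<omega> + s * Y \<omega>, s * X \<omega> - c * Y \<omega>))
      = distr M (lborel \<Otimes>\<^sub>M lborel) (\<lambda>x. (X x, Y x))"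
  proof -
    have "distr M (lborel \<Otimes>\<^sub>M lborel) (\<lambda>\<omega>. (c * X \<omega> + s * Y \<omega>, s * X \<omega> - c * Y \<omega>))
        = distr M (lborel \<Otimes>\<^sub>M lborel) (?R \<circ> (\<lambda>x. (X x, Y x)))" by (simp add: comp_def)
    also have "\<dots> = distr (distr M (lborel \<Otimes>\<^sub>M lborel) (\<lambda>x. (X x, Y x))) (lborel \<Otimes>\<^sub>M lborel) ?R"
      by (rule distr_distr[symmetric, OF Rm XYm])
    also have "\<dots> = distr M (lborel \<Otimes>\<^sub>M lborel) (\<lambda>x. (X x, Y x))"
      unfolding D \<Phi>_def by (rule distr_std_normal_pair_reflect[OF cs s])
    finally show ?thesis .
  qed
  have UVm: "(\<lambda>\<omega>. (c * X \<omega> + s * Y \<omega>, s * X \<omega> - c * Y \<omega>)) \<in> measurable M (lborel \<Otimes>\<^sub>M lborel)" by measurable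
  have sndm: "snd \<in> measurable (lborel \<Otimes>\<^sub>M lborel) (lborel::real measure)" by measurable
  have fstm: "fst \<in> measurable (lborel \<Otimes>\<^sub>M lborel) (lborel::real measure)" by measurable
  have dV: "distr M lborel (\<lambda>\<omega>. s * X \<omega> - c * Y \<omega>) = distr M lborel Y"
  proof -
    have "distr M lborel (\<lambda>\<omega>. s * X \<omega> - c * Y \<omega>) = distr M lborel (snd \<circ> (\<lambda>\<omega>. (c * X \<omega> + s * Y \<omega>, s * X \<omega> - c * Y \<omega>)))"
      by (simp add: comp_def)
    also have "\<dots> = distr (distr M (lborel \<Otimes>\<^sub>M lborel) (\<lambda>\<omega>. (c * X \<omega> + s * Y \<omega>, s * X \<omega> - c * Y \<omega>))) lborel snd"
      by (rule distr_distr[symmetric, OF sndm UVm])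
    also have "\<dots> = distr (distr M (lborel \<Otimes>\<^sub>M lborel) (\<lambda>x. (X x, Y x))) lborel snd" unfolding UV ..
    also have "\<dots> = distr M lborel (snd \<circ> (\<lambda>x. (X x, Y x)))"
      by (rule distr_distr[OF sndm XYm])
    finally show ?thesis by (simp add: comp_def)
  qed
  have dU: "distr M lborel (\<lambda>\<omega>. c * X \<omega> + s * Y \<omega>) = distr M lborel X"
  proof -
    have "distr M lborel (\<lambda>\<omega>. c * X \<omega> + s * Y \<omega>) = distr M lborel (fst \<circ> (\<lambda>\<omega>. (c * X \<omega> + s * Y \<omega>, s * X \<omega> - c * Y \<omega>)))"
      by (simp add: comp_def)
    also have "\<dots> = distr (distr M (lborel \<Otimes>\<^sub>M lborel) (\<lambda>\<omega>. (c * X \<omega> + s * Y \<omega>, s * X \<omega> - c * Y \<omega>))) lborel fst"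
      by (rule distr_distr[symmetric, OF fstm UVm])
    also have "\<dots> = distr (distr M (lborel \<Otimes>\<^sub>M lborel) (\<lambda>x. (X x, Y x))) lborel fst" unfolding UV ..
    also have "\<dots> = distr M lborel (fst \<circ> (\<lambda>x. (X x, Y x)))"
      by (rule distr_distr[OF fstm XYm])
    finally show ?thesis by (simp add: comp_def)
  qed
  show "distributed M lborel (\<lambda>\<omega>. s * X \<omega> - c * Y \<omega>) std_normal_density"
    unfolding distributed_def using dV distributed_distr_eq_density[OF Y] by simp
  show "distributed M lborel (\<lambda>\<omega>. c * X \<omega> + s * Y \<omega>) std_normal_density"
    unfolding distributed_def using dU distributed_distr_eq_density[OF X] by simp
  have XYd: "distr M borel X \<Otimes>\<^sub>M distr M borel Y = distr M (borel \<Otimes>\<^sub>M borel) (\<lambda>x. (X x, Y x))"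
    using XY indep_var_distribution_eq by blast
  show "indep_var borel (\<lambda>\<omega>. c * X \<omega> + s * Y \<omega>) borel (\<lambda>\<omega>. s * X \<omega> - c * Y \<omega>)"
    unfolding indep_var_distribution_eq
    using XYd UV dU dV by (simp add: distr_lborel_borel distr_lborel2_borel2)
qed

lemma (in prob_space) gauss_pair:
  fixes S D :: "'a \<Rightarrow> real" and a b :: real
  assumes a: "0 < a" and b: "0 < b"
    and S: "distributed M lborel S (normal_density 0 (sqrt a))"
    and D: "distributed M lborel D (normal_density 0 (sqrt b))"
    and SD: "indep_var borel S borel D"
  shows "indep_var borel (\<lambda>\<omega>. S \<omega> + D \<omega>) borel (\<lambda>\<omega>. (S \<omega> * b - D \<omega> * a) / sqrt (a * b * (a + b)))"
    and "distributed M lborel (\<lambda>\<omega>. (S \<omega> * b - D \<omega> * a) / sqrt (a * b * (a + b))) std_normal_density"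
proof -
  define X where "X = (\<lambda>\<omega>. S \<omega> / sqrt a)"
  define Y where "Y = (\<lambda>\<omega>. D \<omega> / sqrt b)"
  define c where "c = sqrt a / sqrt (a + b)"
  define s where "s = sqrt b / sqrt (a + b)"
  have X: "distributed M lborel X std_normal_density"
    using normal_standard_normal_convert[of "sqrt a" S 0] S a unfolding X_def by simp
  have Y: "distributed M lborel Y std_normal_density"
    using normal_standard_normal_convert[of "sqrt b" D 0] D b unfolding Y_def by simp
  have XY: "indep_var borel X borel Y"
    using indep_var_compose[OF SD, of "\<lambda>x. x / sqrt a" borel "\<lambda>x. x / sqrt b" borel]
    unfolding X_def Y_def by (simp add: comp_def)
  have cs: "c\<^sup>2 + s\<^sup>2 = 1"
  proof -
    have "c\<^sup>2 + s\<^sup>2 = a / (a + b) + b / (a + b)" using a b unfolding c_def s_def by (simp add: power_divide)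
    also have "\<dots> = 1" using a b by (simp add: add_divide_distrib[symmetric])
    finally show ?thesis .
  qed
  have s0: "s \<noteq> 0" using a b unfolding s_def by simp
  have e1: "(\<lambda>\<omega>. s * X \<omega> - c * Y \<omega>) = (\<lambda>\<omega>. (S \<omega> * b - D \<omega> * a) / sqrt (a * b * (a + b)))"
  proof
    fix \<omega>
    have sa: "sqrt a * sqrt a = a" and sb: "sqrt b * sqrt b = b" using a b by simp_all
    have pos: "sqrt a > 0" "sqrt b > 0" "sqrt (a+b) > 0" using a b by simp_all
    have "s * X \<omega> - c * Y \<omega> = (S \<omega> * (sqrt b * sqrt b) - D \<omega> * (sqrt a * sqrt a)) / (sqrt a * sqrt b * sqrt (a + b))"
      unfolding s_def c_def X_def Y_def using pos by (simp add: field_simps)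
    also have "\<dots> = (S \<omega> * b - D \<omega> * a) / sqrt (a * b * (a + b))" unfolding sa sb by (simp add: real_sqrt_mult)
    finally show "s * X \<omega> - c * Y \<omega> = (S \<omega> * b - D \<omega> * a) / sqrt (a * b * (a + b))" .
  qed
  have e2: "(\<lambda>\<omega>. S \<omega> + D \<omega>) = (\<lambda>x. sqrt (a + b) * x) \<circ> (\<lambda>\<omega>. c * X \<omega> + s * Y \<omega>)"
    unfolding c_def s_def X_def Y_def using a b by (auto simp: field_simps)
  note G = gauss_reflect_indep[OF X Y XY cs s0]
  show "distributed M lborel (\<lambda>\<omega>. (S \<omega> * b - D \<omega> * a) / sqrt (a * b * (a + b))) std_normal_density"
    using G(2) unfolding e1 .
  have "indep_var borel ((\<lambda>x. sqrt (a + b) * x) \<circ> (\<lambda>\<omega>. c * X \<omega> + s * Y \<omega>)) borel ((\<lambda>x. x) \<circ> (\<lambda>\<omega>. s * X \<omega> - c * Y \<omega>))"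
    by (rule indep_var_compose[OF G(1)]) simp_all
  then show "indep_var borel (\<lambda>\<omega>. S \<omega> + D \<omega>) borel (\<lambda>\<omega>. (S \<omega> * b - D \<omega> * a) / sqrt (a * b * (a + b)))"
    unfolding e2[symmetric] e1[symmetric] by (simp add: comp_def)
qed

lemma (in prob_space) indep_var_pair_extend:
  assumes XY: "indep_var MX X MY Y"
    and fg: "indep_var N1 (\<lambda>\<omega>. f (X \<omega>)) N2 (\<lambda>\<omega>. g (X \<omega>))"
    and f: "f \<in> measurable MX N1" and g: "g \<in> measurable MX N2"
    and A: "A \<in> sets N1" and C: "C \<in> sets (N2 \<Otimes>\<^sub>M MY)"
  shows "prob ((\<lambda>\<omega>. f (X \<omega>)) -` A \<inter> (\<lambda>\<omega>. (g (X \<omega>), Y \<omega>)) -` C \<inter> space M)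
       = prob ((\<lambda>\<omega>. f (X \<omega>)) -` A \<inter> space M) * prob ((\<lambda>\<omega>. (g (X \<omega>), Y \<omega>)) -` C \<inter> space M)"
proof -
  have X: "X \<in> measurable M MX" using indep_var_rv1[OF XY] .
  have Y: "Y \<in> measurable M MY" using indep_var_rv2[OF XY] .
  have fX: "(\<lambda>\<omega>. f (X \<omega>)) \<in> measurable M N1" using f X by measurable
  have gX: "(\<lambda>\<omega>. g (X \<omega>)) \<in> measurable M N2" using g X by measurable
  have gXY: "(\<lambda>\<omega>. (g (X \<omega>), Y \<omega>)) \<in> measurable M (N2 \<Otimes>\<^sub>M MY)" using gX Y by measurable
  let ?F1 = "{(\<lambda>\<omega>. f (X \<omega>)) -` A \<inter> space M | A. A \<in> sets N1}"
  let ?G = "{(\<lambda>\<omega>. (g (X \<omega>), Y \<omega>)) -` A \<inter> space M | A. A \<in> {a \<times> b | a b. a \<in> sets N2 \<and> b \<in> sets MY}}"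
  have Zfun: "(\<lambda>\<omega>. (g (X \<omega>), Y \<omega>)) \<in> space M \<rightarrow> space N2 \<times> space MY"
    using gX Y by (auto dest: measurable_space)
  have F2: "{(\<lambda>\<omega>. (g (X \<omega>), Y \<omega>)) -` A \<inter> space M | A. A \<in> sets (N2 \<Otimes>\<^sub>M MY)} = sigma_sets (space M) ?G"
    unfolding sets_pair_measure by (rule sigma_sets_vimage_commute[OF Zfun])
  have Gsub: "?G \<subseteq> Pow (space M)" by auto
  have ev1: "?F1 \<subseteq> events" using fX by (auto intro: measurable_sets)
  have evG: "?G \<subseteq> events"
  proof
    fix E assume "E \<in> ?G"
    then obtain a b where ab: "a \<in> sets N2" "b \<in> sets MY" and E: "E = (\<lambda>\<omega>. (g (X \<omega>), Y \<omega>)) -` (a \<times> b) \<inter> space M" by auto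
    have "a \<times> b \<in> sets (N2 \<Otimes>\<^sub>M MY)" using ab by auto
    then show "E \<in> events" unfolding E using measurable_sets[OF gXY] by simp
  qed
  have prod: "prob (E \<inter> H) = prob E * prob H" if E: "E \<in> ?F1" and H: "H \<in> ?G" for E H
  proof -
    obtain A where A: "A \<in> sets N1" and EA: "E = (\<lambda>\<omega>. f (X \<omega>)) -` A \<inter> space M" using E by auto
    obtain a b where ab: "a \<in> sets N2" "b \<in> sets MY" and Hab: "H = (\<lambda>\<omega>. (g (X \<omega>), Y \<omega>)) -` (a \<times> b) \<inter> space M" using H by auto
    let ?Xa = "f -` A \<inter> g -` a \<inter> space MX"
    have Xa: "?Xa \<in> sets MX"
    proof -
      have "?Xa = (f -` A \<inter> space MX) \<inter> (g -` a \<inter> space MX)" by auto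
      then show ?thesis using measurable_sets[OF f A] measurable_sets[OF g ab(1)] by simp
    qed
    have ga: "g -` a \<inter> space MX \<in> sets MX" using g ab(1) by (rule measurable_sets)
    have Xsp: "\<And>x. x \<in> space M \<Longrightarrow> X x \<in> space MX" using measurable_space[OF X] by blast
    have e1: "E \<inter> H = (\<lambda>x. (X x, Y x)) -` (?Xa \<times> b) \<inter> space M"
      unfolding EA Hab using Xsp by auto
    have p1: "prob (E \<inter> H) = prob (X -` ?Xa \<inter> space M) * prob (Y -` b \<inter> space M)"
      using indep_varD[OF XY Xa ab(2)] unfolding e1 .
    have e2: "X -` ?Xa \<inter> space M = (\<lambda>x. (f (X x), g (X x))) -` (A \<times> a) \<inter> space M"
      using Xsp by auto
    have p2: "prob (X -` ?Xa \<inter> space M) = prob E * prob ((\<lambda>\<omega>. g (X \<omega>)) -` a \<inter> space M)"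
      using indep_varD[OF fg A ab(1)] unfolding e2 EA .
    have e3: "H = (\<lambda>x. (X x, Y x)) -` ((g -` a \<inter> space MX) \<times> b) \<inter> space M"
      unfolding Hab using Xsp by auto
    have e4: "X -` (g -` a \<inter> space MX) \<inter> space M = (\<lambda>\<omega>. g (X \<omega>)) -` a \<inter> space M"
      using Xsp by auto
    have p3: "prob H = prob ((\<lambda>\<omega>. g (X \<omega>)) -` a \<inter> space M) * prob (Y -` b \<inter> space M)"
      using indep_varD[OF XY ga ab(2)] unfolding e3[symmetric] e4 .
    show ?thesis unfolding p1 p2 p3 by (simp add: mult.assoc)
  qed
  have ind: "indep_set ?F1 ?G"
    unfolding indep_sets2_eq
    by (intro conjI ev1 evG ballI prod)
  have st1: "Int_stable ?F1"
    unfolding Int_stable_def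
  proof clarify
    fix A B assume "A \<in> sets N1" "B \<in> sets N1"
    then show "\<exists>C. (\<lambda>\<omega>. f (X \<omega>)) -` A \<inter> space M \<inter> ((\<lambda>\<omega>. f (X \<omega>)) -` B \<inter> space M) = (\<lambda>\<omega>. f (X \<omega>)) -` C \<inter> space M \<and> C \<in> sets N1"
      by (intro exI[of _ "A \<inter> B"] conjI sets.Int) auto
  qed
  have st2: "Int_stable ?G"
    unfolding Int_stable_def
  proof clarify
    fix a b a' b' assume "a \<in> sets N2" "b \<in> sets MY" "a' \<in> sets N2" "b' \<in> sets MY"
    then show "\<exists>C. (\<lambda>\<omega>. (g (X \<omega>), Y \<omega>)) -` (a \<times> b) \<inter> space M \<inter> ((\<lambda>\<omega>. (g (X \<omega>), Y \<omega>)) -` (a' \<times> b') \<inter> space M) = (\<lambda>\<omega>. (g (X \<omega>), Y \<omega>)) -` C \<inter> space M \<and> C \<in> {a \<times> b |a b. a \<in> sets N2 \<and> b \<in> sets MY}"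
      by (intro exI[of _ "(a \<inter> a') \<times> (b \<inter> b')"] conjI) auto
  qed
  have "indep_set (sigma_sets (space M) ?F1) (sigma_sets (space M) ?G)"
    by (rule indep_set_sigma_sets[OF ind st1 st2])
  moreover have "sigma_sets (space M) ?G = sigma_sets (space M) (sigma_sets (space M) ?G)"
    using Gsub by (simp add: sigma_sets_sigma_sets_eq)
  ultimately have I: "indep_set (sigma_sets (space M) ?F1) {(\<lambda>\<omega>. (g (X \<omega>), Y \<omega>)) -` A \<inter> space M | A. A \<in> sets (N2 \<Otimes>\<^sub>M MY)}"
    unfolding F2 by simp
  have "(\<lambda>\<omega>. f (X \<omega>)) -` A \<inter> space M \<in> sigma_sets (space M) ?F1" using A by blast
  moreover have "(\<lambda>\<omega>. (g (X \<omega>), Y \<omega>)) -` C \<inter> space M \<in> {(\<lambda>\<omega>. (g (X \<omega>), Y \<omega>)) -` A \<inter> space M | A. A \<in> sets (N2 \<Otimes>\<^sub>M MY)}"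
    using C by blast
  ultimately have "prob (((\<lambda>\<omega>. f (X \<omega>)) -` A \<inter> space M) \<inter> ((\<lambda>\<omega>. (g (X \<omega>), Y \<omega>)) -` C \<inter> space M))
       = prob ((\<lambda>\<omega>. f (X \<omega>)) -` A \<inter> space M) * prob ((\<lambda>\<omega>. (g (X \<omega>), Y \<omega>)) -` C \<inter> space M)"
    by (rule indep_setD[OF I])
  moreover have "((\<lambda>\<omega>. f (X \<omega>)) -` A \<inter> space M) \<inter> ((\<lambda>\<omega>. (g (X \<omega>), Y \<omega>)) -` C \<inter> space M)
      = (\<lambda>\<omega>. f (X \<omega>)) -` A \<inter> (\<lambda>\<omega>. (g (X \<omega>), Y \<omega>)) -` C \<inter> space M" by blast
  ultimately show ?thesis by simp
qed

lemma (in prob_space) indep_vars_chain: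
  fixes X :: "'i \<Rightarrow> 'a \<Rightarrow> real" and J :: "'i set"
  assumes fin: "finite J"
    and rv: "\<And>i. i \<in> J \<Longrightarrow> X i \<in> borel_measurable M"
    and step: "\<And>K. K \<subseteq> J \<Longrightarrow> K \<noteq> {} \<Longrightarrow> \<exists>j\<in>K. \<exists>(N::'c measure) Y. Y \<in> measurable M N \<and>
      (\<forall>i\<in>K-{j}. \<exists>h \<in> borel_measurable N. \<forall>\<omega>\<in>space M. X i \<omega> = h (Y \<omega>)) \<and>
      (\<forall>A\<in>sets borel. \<forall>C\<in>sets N. prob (X j -` A \<inter> Y -` C \<inter> space M) = prob (X j -` A \<inter> space M) * prob (Y -` C \<inter> space M))"
  shows "indep_vars (\<lambda>_. borel) X J"
proof -
  have main: "finite K \<Longrightarrow> K \<subseteq> J \<Longrightarrow> indep_vars (\<lambda>_. borel) X K" for K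
  proof (induct K rule: finite_psubset_induct)
    case (psubset K)
    show ?case
    proof (cases "K = {}")
      case True
      then show ?thesis unfolding indep_vars_def2 indep_sets_def by auto
    next
      case False
      obtain j and N :: "'c measure" and Y where jK: "j \<in> K" and Y: "Y \<in> measurable M N"
        and hex: "\<forall>i\<in>K-{j}. \<exists>h \<in> borel_measurable N. \<forall>\<omega>\<in>space M. X i \<omega> = h (Y \<omega>)"
        and ind: "\<forall>A\<in>sets borel. \<forall>C\<in>sets N. prob (X j -` A \<inter> Y -` C \<inter> space M) = prob (X j -` A \<inter> space M) * prob (Y -` C \<inter> space M)"
        using step[OF psubset.prems False] by blast
      obtain H where H: "\<forall>i\<in>K-{j}. H i \<in> borel_measurable N \<and> (\<forall>\<omega>\<in>space M. X i \<omega> = H i (Y \<omega>))"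
      proof -
        have "\<forall>i\<in>K-{j}. \<exists>h. h \<in> borel_measurable N \<and> (\<forall>\<omega>\<in>space M. X i \<omega> = h (Y \<omega>))" using hex by blast
        from bchoice[OF this] show ?thesis using that by blast
      qed
      have IH: "indep_vars (\<lambda>_. borel) X (K - {j})"
        using psubset.hyps(2)[of "K - {j}"] jK psubset.prems by blast
      then have IHs: "indep_sets (\<lambda>i. {X i -` A \<inter> space M |A. A \<in> sets borel}) (K - {j})"
        unfolding indep_vars_def2 by simp
      show ?thesis unfolding indep_vars_def2
      proof (intro conjI ballI indep_setsI)
        show "\<And>i. i \<in> K \<Longrightarrow> random_variable borel (X i)" using rv psubset.prems by auto
        show "\<And>i. i \<in> K \<Longrightarrow> {X i -` A \<inter> space M |A. A \<in> sets borel} \<subseteq> events"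
          using rv psubset.prems by (auto intro: measurable_sets)
      next
        fix A L assume L: "L \<noteq> {}" "L \<subseteq> K" "finite L" and AL: "\<forall>l\<in>L. A l \<in> {X l -` A \<inter> space M |A. A \<in> sets borel}"
        show "prob (\<Inter> (A ` L)) = (\<Prod>l\<in>L. prob (A l))"
        proof (cases "j \<in> L")
          case False
          then have "L \<subseteq> K - {j}" using L by auto
          then show ?thesis using indep_setsD[OF IHs _ L(1) L(3)] AL by blast
        next
          case True
          obtain B where B: "\<forall>l\<in>L. B l \<in> sets borel \<and> A l = X l -` B l \<inter> space M"
          proof -
            have "\<forall>l\<in>L. \<exists>b. b \<in> sets borel \<and> A l = X l -` b \<inter> space M" using AL by blast
            from bchoice[OF this] show ?thesis using that by blast
          qed
          show ?thesis
          proof (cases "L = {j}")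
            case True then show ?thesis by simp
          next
            case False
            define L' where "L' = L - {j}"
            have L': "L' \<noteq> {}" "finite L'" "L' \<subseteq> K - {j}" using False True L unfolding L'_def by auto
            define C where "C = (\<Inter>l\<in>L'. H l -` B l \<inter> space N)"
            have Cs: "C \<in> sets N" unfolding C_def
            proof (rule sets.finite_INT[OF L'(2)])
              fix l assume "l \<in> L'"
              then have l: "l \<in> K - {j}" "l \<in> L" using L' unfolding L'_def by auto
              have "H l \<in> borel_measurable N" using H l(1) by blast
              moreover have "B l \<in> sets borel" using B l(2) by blast
              ultimately show "H l -` B l \<inter> space N \<in> sets N" by (rule measurable_sets)
            qed (use L' in auto)
            have Ysp: "\<And>\<omega>. \<omega> \<in> space M \<Longrightarrow> Y \<omega> \<in> space N" using measurable_space[OF Y] by blast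
            have eqL': "(\<Inter>l\<in>L'. A l) = Y -` C \<inter> space M"
            proof (rule set_eqI)
              fix \<omega>
              show "\<omega> \<in> (\<Inter>l\<in>L'. A l) \<longleftrightarrow> \<omega> \<in> Y -` C \<inter> space M"
              proof
                assume w: "\<omega> \<in> (\<Inter>l\<in>L'. A l)"
                then have sp: "\<omega> \<in> space M" using L' B unfolding L'_def by auto
                have "Y \<omega> \<in> C" unfolding C_def
                proof
                  fix l assume l: "l \<in> L'"
                  then have l2: "l \<in> K - {j}" "l \<in> L" using L' unfolding L'_def by auto
                  have "X l \<omega> = H l (Y \<omega>)" using H l2(1) sp by blast
                  moreover have "X l \<omega> \<in> B l" using w l B l2(2) by auto
                  ultimately show "Y \<omega> \<in> H l -` B l \<inter> space N" using Ysp[OF sp] by auto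
                qed
                then show "\<omega> \<in> Y -` C \<inter> space M" using sp by auto
              next
                assume w: "\<omega> \<in> Y -` C \<inter> space M"
                show "\<omega> \<in> (\<Inter>l\<in>L'. A l)"
                proof
                  fix l assume l: "l \<in> L'"
                  then have l2: "l \<in> K - {j}" "l \<in> L" using L' unfolding L'_def by auto
                  have sp: "\<omega> \<in> space M" using w by auto
                  have "X l \<omega> = H l (Y \<omega>)" using H l2(1) sp by blast
                  moreover have "H l (Y \<omega>) \<in> B l" using w l unfolding C_def by blast
                  ultimately show "\<omega> \<in> A l" using B l2(2) sp by auto
                qed
              qed
            qed
            have eqL: "\<Inter> (A ` L) = X j -` B j \<inter> Y -` C \<inter> space M"
            proof -
              have "\<Inter> (A ` L) = A j \<inter> (\<Inter>l\<in>L'. A l)" using True unfolding L'_def by auto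
              also have "\<dots> = X j -` B j \<inter> Y -` C \<inter> space M" unfolding eqL' using B True by auto
              finally show ?thesis .
            qed
            have "prob (\<Inter> (A ` L)) = prob (A j) * prob (\<Inter>l\<in>L'. A l)"
              unfolding eqL eqL' using ind B True Cs by auto
            also have "prob (\<Inter>l\<in>L'. A l) = (\<Prod>l\<in>L'. prob (A l))"
              using indep_setsD[OF IHs L'(3) L'(1) L'(2)] AL unfolding L'_def by blast
            also have "prob (A j) * (\<Prod>l\<in>L'. prob (A l)) = (\<Prod>l\<in>L. prob (A l))"
              unfolding L'_def using True L(3) by (simp add: prod.remove)
            finally show ?thesis .
          qed
        qed
      qed
    qed
  qed
  show ?thesis using main[OF fin] by simp
qed

lemma consecutive_unique_right:
  "consecutive P a b \<Longrightarrow> consecutive P a b' \<Longrightarrow> b = b'"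
  unfolding consecutive_def by (metis greaterThanLessThan_iff disjoint_iff linorder_neqE_linordered_idom)

lemma consecutive_unique_left:
  "consecutive P a b \<Longrightarrow> consecutive P a' b \<Longrightarrow> a = a'"
  unfolding consecutive_def by (metis greaterThanLessThan_iff disjoint_iff linorder_neqE_linordered_idom)

lemma consecutive_between:
  "consecutive P a b \<Longrightarrow> x \<in> P \<Longrightarrow> a < x \<Longrightarrow> x < b \<Longrightarrow> False"
  unfolding consecutive_def by auto

lemma consecutive_overlap:
  assumes "consecutive P a b" "consecutive P a' b'" "a < x" "x < b" "a' < x" "x < b'"
  shows "a = a' \<and> b = b'"
proof -
  have "a = a'"
  proof (rule ccontr)
    assume "a \<noteq> a'"
    then have "a < a' \<or> a' < a" by auto
    moreover have "a \<in> P" "a' \<in> P" using assms unfolding consecutive_def by auto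
    ultimately show False using assms consecutive_between by (metis order.strict_trans)
  qed
  then show ?thesis using assms consecutive_unique_right by blast
qed

lemma consecutive_exists_right:
  assumes "finite P" "a \<in> P" "b \<in> P" "a < b"
  shows "\<exists>c. consecutive P a c"
proof -
  let ?Q = "{x\<in>P. a < x}"
  have fin: "finite ?Q" "?Q \<noteq> {}" using assms by auto
  define c where "c = Min ?Q"
  have "c \<in> ?Q" unfolding c_def using Min_in[OF fin] .
  moreover have "\<forall>x\<in>?Q. c \<le> x" unfolding c_def using Min_le[OF fin(1)] by auto
  ultimately have "consecutive P a c" unfolding consecutive_def using assms by force
  then show ?thesis by blast
qed

lemma consecutive_cover:
  assumes P: "is_partition P" and t: "0 \<le> t" "t \<le> 1"
  shows "\<exists>a b. consecutive P a b \<and> a \<le> t \<and> t \<le> b"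
proof (cases "t = 1")
  case True
  let ?Q = "{x\<in>P. x < 1}"
  have fin: "finite ?Q" "?Q \<noteq> {}" using P unfolding is_partition_def by auto
  define a where "a = Max ?Q"
  have aQ: "a \<in> ?Q" unfolding a_def using Max_in[OF fin] .
  have "\<forall>x\<in>?Q. x \<le> a" unfolding a_def using Max_ge[OF fin(1)] by auto
  then have "consecutive P a 1" unfolding consecutive_def using aQ P unfolding is_partition_def by force
  moreover have "a \<le> 1" using aQ by auto
  ultimately show ?thesis using True by blast
next
  case False
  then have t1: "t < 1" using t by auto
  let ?Q = "{x\<in>P. x \<le> t}"
  have fin: "finite ?Q" "?Q \<noteq> {}" using P t unfolding is_partition_def by auto
  define a where "a = Max ?Q"
  have aQ: "a \<in> ?Q" unfolding a_def using Max_in[OF fin] .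
  have amax: "\<forall>x\<in>?Q. x \<le> a" unfolding a_def using Max_ge[OF fin(1)] by auto
  have "1 \<in> P" "finite P" using P unfolding is_partition_def by auto
  moreover have "a < 1" using aQ t1 by auto
  ultimately obtain b where ab: "consecutive P a b" using consecutive_exists_right aQ by blast
  have "t \<le> b"
  proof (rule ccontr)
    assume "\<not> t \<le> b"
    then have "b \<in> ?Q" using ab unfolding consecutive_def by auto
    then show False using amax ab unfolding consecutive_def by force
  qed
  then show ?thesis using ab aQ by blast
qed

lemma consecutive_le_mesh:
  assumes P: "is_partition P" and ab: "consecutive P a b"
  shows "b - a \<le> mesh P"
proof -
  have "{b - a | a b. consecutive P a b} \<subseteq> (\<lambda>(a, b). b - a) ` (P \<times> P)"
    unfolding consecutive_def by auto
  then have "finite {b - a | a b. consecutive P a b}"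
    using P unfolding is_partition_def by (meson finite_SigmaI finite_imageI finite_subset)
  then show ?thesis unfolding mesh_def using ab by (intro Max_ge) auto
qed

lemma consecutive_in01:
  "is_partition P \<Longrightarrow> consecutive P a b \<Longrightarrow> 0 \<le> a \<and> a < b \<and> b \<le> 1"
  unfolding is_partition_def consecutive_def by auto

lemma fr_mono:
  assumes "finitely_refining \<pi>" "n \<le> m"
  shows "\<pi> n \<subseteq> \<pi> m"
  using assms(2)
proof (induct m)
  case 0 then show ?case by simp
next
  case (Suc m)
  then show ?case using assms(1) unfolding finitely_refining_def
    by (metis le_SucE order_refl subset_trans)
qed

lemma fr_partition: "finitely_refining \<pi> \<Longrightarrow> is_partition (\<pi> n)"
  unfolding finitely_refining_def by auto

lemma triple_props:
  assumes fr: "finitely_refining \<pi>" and tr: "(t1, t2, t3) \<in> schauder_triples \<pi> m"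
  shows "0 \<le> t1" "t1 < t2" "t2 < t3" "t3 \<le> 1"
    "t1 \<in> \<pi> m" "t1 \<in> \<pi> (Suc m)" "t2 \<in> \<pi> (Suc m)" "t3 \<in> \<pi> (Suc m)"
    "\<And>x. x \<in> \<pi> m \<Longrightarrow> \<not> (t1 < x \<and> x < t3)"
    "consecutive (\<pi> (Suc m)) t2 t3"
proof -
  obtain ur where ur: "consecutive (\<pi> m) t1 ur" "t1 < t2" "t2 < ur" "t2 \<in> \<pi> (Suc m)"
      "consecutive (\<pi> (Suc m)) t2 t3" "t3 \<le> ur"
    using tr unfolding schauder_triples_def by auto
  have P: "is_partition (\<pi> m)" "is_partition (\<pi> (Suc m))" using fr_partition[OF fr] by auto
  have sub: "\<pi> m \<subseteq> \<pi> (Suc m)" using fr unfolding finitely_refining_def by auto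
  show "0 \<le> t1" using consecutive_in01[OF P(1) ur(1)] by simp
  show "t1 < t2" by fact
  show "t2 < t3" using ur(5) unfolding consecutive_def by simp
  show "t3 \<le> 1" using consecutive_in01[OF P(2) ur(5)] by simp
  show "t1 \<in> \<pi> m" using ur(1) unfolding consecutive_def by simp
  then show "t1 \<in> \<pi> (Suc m)" using sub by auto
  show "t2 \<in> \<pi> (Suc m)" by fact
  show "t3 \<in> \<pi> (Suc m)" using ur(5) unfolding consecutive_def by simp
  show "\<And>x. x \<in> \<pi> m \<Longrightarrow> \<not> (t1 < x \<and> x < t3)" using ur(1) ur(6) consecutive_between by fastforce
  show "consecutive (\<pi> (Suc m)) t2 t3" by fact
qed

lemma triple_unique_t3:
  assumes fr: "finitely_refining \<pi>" and tr: "(t1, t2, t3) \<in> schauder_triples \<pi> m"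
    and tr': "(t1', t2', t3) \<in> schauder_triples \<pi> m"
  shows "t1 = t1' \<and> t2 = t2'"
proof -
  obtain ur where ur: "consecutive (\<pi> m) t1 ur" "t1 < t2" "t2 < ur" "consecutive (\<pi> (Suc m)) t2 t3"
    using tr unfolding schauder_triples_def by auto
  obtain ur' where ur': "consecutive (\<pi> m) t1' ur'" "t1' < t2'" "t2' < ur'" "consecutive (\<pi> (Suc m)) t2' t3"
    using tr' unfolding schauder_triples_def by auto
  have "t2 = t2'" using consecutive_unique_left[OF ur(4) ur'(4)] .
  then show ?thesis using consecutive_overlap[OF ur(1) ur'(1), of t2] ur ur' by auto
qed

lemma triple_finite:
  assumes fr: "finitely_refining \<pi>"
  shows "finite (schauder_triples \<pi> m)"
proof -
  have "schauder_triples \<pi> m \<subseteq> \<pi> m \<times> \<pi> (Suc m) \<times> \<pi> (Suc m)"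
    using triple_props[OF fr] by auto
  moreover have "finite (\<pi> m \<times> \<pi> (Suc m) \<times> \<pi> (Suc m))"
    using fr_partition[OF fr] unfolding is_partition_def by auto
  ultimately show ?thesis by (rule finite_subset)
qed

lemma enum_set:
  fixes P :: "real set" assumes "finite P" "P \<noteq> {}"
  obtains p :: "nat \<Rightarrow> real" and n where "\<And>i j. i < j \<Longrightarrow> j \<le> n \<Longrightarrow> p i < p j" "p ` {..n} = P"
proof -
  define xs where "xs = sorted_list_of_set P"
  have s: "sorted_wrt (<) xs" unfolding xs_def by (rule strict_sorted_list_of_set)
  have st: "set xs = P" unfolding xs_def using assms(1) by simp
  have len: "length xs \<ge> 1" using st assms(2) by (cases xs) auto
  have "(\<lambda>i. xs ! i) ` {..length xs - 1} = set xs"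
  proof -
    have "{..length xs - 1} = {..<length xs}" using len by auto
    then show ?thesis by (simp add: set_conv_nth) (auto simp: image_def)
  qed
  moreover have "\<And>i j. i < j \<Longrightarrow> j \<le> length xs - 1 \<Longrightarrow> xs ! i < xs ! j"
    using len by (intro sorted_wrt_nth_less[OF s]) auto
  ultimately show ?thesis using that st by blast
qed

lemma enum_mono_iff:
  fixes p :: "nat \<Rightarrow> real"
  assumes mono0: "\<forall>i j. i < j \<longrightarrow> j \<le> n \<longrightarrow> p i < p j" and i: "i \<le> n" and j: "j \<le> n"
  shows "p i \<le> p j \<longleftrightarrow> i \<le> j" and "p i < p j \<longleftrightarrow> i < j" and "p i = p j \<longleftrightarrow> i = j"
proof -
  have mono: "\<And>i j. i < j \<Longrightarrow> j \<le> n \<Longrightarrow> p i < p j" using mono0 by blast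
  have lt: "p i < p j \<longleftrightarrow> i < j" if "i \<le> n" "j \<le> n" for i j
  proof
    assume "p i < p j"
    show "i < j"
    proof (rule ccontr)
      assume "\<not> i < j"
      then have "j = i \<or> j < i" by auto
      then show False using mono[of j i] \<open>p i < p j\<close> that by auto
    qed
  qed (use mono that in auto)
  show "p i < p j \<longleftrightarrow> i < j" using lt i j .
  show "p i \<le> p j \<longleftrightarrow> i \<le> j" using lt[OF j i] by auto
  show "p i = p j \<longleftrightarrow> i = j" using lt[OF j i] lt[OF i j] by (metis less_irrefl linorder_neqE_nat)
qed

lemma bm_prob_space: "brownian_motion M W \<Longrightarrow> prob_space M"
  unfolding brownian_motion_def by simp

lemma bm_meas: "brownian_motion M W \<Longrightarrow> 0 \<le> t \<Longrightarrow> t \<le> 1 \<Longrightarrow> W t \<in> borel_measurable M"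
  unfolding brownian_motion_def by simp

lemma bm_incr: "brownian_motion M W \<Longrightarrow> 0 \<le> s \<Longrightarrow> s < t \<Longrightarrow> t \<le> 1 \<Longrightarrow>
    distributed M lborel (\<lambda>\<omega>. W t \<omega> - W s \<omega>) (normal_density 0 (sqrt (t - s)))"
  unfolding brownian_motion_def by blast

lemma bm_indep: "brownian_motion M W \<Longrightarrow> 0 \<le> ts 0 \<Longrightarrow> (\<And>i. i < n \<Longrightarrow> ts i < ts (Suc i)) \<Longrightarrow> ts n \<le> 1 \<Longrightarrow>
    prob_space.indep_vars M (\<lambda>_. borel) (\<lambda>i \<omega>. W (ts (Suc i)) \<omega> - W (ts i) \<omega>) {..<n}"
  unfolding brownian_motion_def by blast

lemma (in prob_space) indep_vars_two:
  assumes "indep_vars M' X {a, b}" "a \<noteq> b"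
  shows "indep_var (M' a) (X a) (M' b) (X b)"
proof -
  have rv: "random_variable (M' a) (X a)" "random_variable (M' b) (X b)"
    using assms(1) unfolding indep_vars_def by auto
  have I: "indep_sets (\<lambda>i. sigma_sets (space M) {X i -` A \<inter> space M |A. A \<in> sets (M' i)}) {a, b}"
    using assms(1) unfolding indep_vars_def by auto
  show ?thesis unfolding indep_var_eq
  proof (intro conjI rv)
    show "indep_set (sigma_sets (space M) {X a -` A \<inter> space M |A. A \<in> sets (M' a)})
        (sigma_sets (space M) {X b -` A \<inter> space M |A. A \<in> sets (M' b)})"
      unfolding indep_sets2_eq
    proof (intro conjI ballI)
      show "sigma_sets (space M) {X a -` A \<inter> space M |A. A \<in> sets (M' a)} \<subseteq> events"
        using I unfolding indep_sets_def by auto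
      show "sigma_sets (space M) {X b -` A \<inter> space M |A. A \<in> sets (M' b)} \<subseteq> events"
        using I unfolding indep_sets_def by auto
      fix e1 e2 assume e1: "e1 \<in> sigma_sets (space M) {X a -` A \<inter> space M |A. A \<in> sets (M' a)}"
        and e2: "e2 \<in> sigma_sets (space M) {X b -` A \<inter> space M |A. A \<in> sets (M' b)}"
      have "prob (\<Inter>i\<in>{a, b}. (\<lambda>i. if i = a then e1 else e2) i) = (\<Prod>i\<in>{a, b}. prob ((\<lambda>i. if i = a then e1 else e2) i))"
        by (rule indep_setsD[OF I]) (use e1 e2 assms(2) in auto)
      then show "prob (e1 \<inter> e2) = prob e1 * prob e2" using assms(2) by (simp add: Int_commute)
    qed
  qed
qed

lemma (in prob_space) indep_var_swap:
  assumes "indep_var Ma A Mb B" shows "indep_var Mb B Ma A"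
proof -
  have rv: "random_variable Ma A" "random_variable Mb B" using assms by (simp_all add: indep_var_eq)
  have I: "indep_set (sigma_sets (space M) {A -` X \<inter> space M |X. X \<in> sets Ma}) (sigma_sets (space M) {B -` X \<inter> space M |X. X \<in> sets Mb})"
    using assms by (simp add: indep_var_eq)
  have "indep_set (sigma_sets (space M) {B -` X \<inter> space M |X. X \<in> sets Mb}) (sigma_sets (space M) {A -` X \<inter> space M |X. X \<in> sets Ma})"
    unfolding indep_sets2_eq
  proof (intro conjI ballI)
    show "sigma_sets (space M) {B -` X \<inter> space M |X. X \<in> sets Mb} \<subseteq> events"
      "sigma_sets (space M) {A -` X \<inter> space M |X. X \<in> sets Ma} \<subseteq> events"
      using I unfolding indep_sets2_eq by auto
    fix a b assume "a \<in> sigma_sets (space M) {B -` X \<inter> space M |X. X \<in> sets Mb}"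
      "b \<in> sigma_sets (space M) {A -` X \<inter> space M |X. X \<in> sets Ma}"
    then have "prob (b \<inter> a) = prob b * prob a" using I unfolding indep_sets2_eq by blast
    then show "prob (a \<inter> b) = prob a * prob b" by (simp add: Int_commute mult.commute)
  qed
  then show ?thesis using rv by (simp add: indep_var_eq)
qed

lemma bm_two:
  assumes bm: "brownian_motion M W" and t: "0 \<le> t1" "t1 < t2" "t2 < t3" "t3 \<le> 1"
  shows "prob_space.indep_var M borel (\<lambda>\<omega>. W t2 \<omega> - W t1 \<omega>) borel (\<lambda>\<omega>. W t3 \<omega> - W t2 \<omega>)"
proof -
  interpret prob_space M using bm_prob_space[OF bm] .
  define ts where "ts = (\<lambda>i::nat. if i = 0 then t1 else if i = 1 then t2 else t3)"
  have "indep_vars (\<lambda>_. borel) (\<lambda>i \<omega>. W (ts (Suc i)) \<omega> - W (ts i) \<omega>) {..<2}"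
    by (rule bm_indep[OF bm]) (use t in \<open>auto simp: ts_def less_2_cases_iff\<close>)
  moreover have "{..<2::nat} = {0, 1}" by auto
  ultimately have "indep_vars (\<lambda>_. borel) (\<lambda>i \<omega>. W (ts (Suc i)) \<omega> - W (ts i) \<omega>) {0, 1}" by simp
  from indep_vars_two[OF this] show ?thesis by (simp add: ts_def)
qed

lemma eta_alt: "eta W (t1, t2, t3) \<omega> = ((W t2 \<omega> - W t1 \<omega>) * (t3 - t2) - (W t3 \<omega> - W t2 \<omega>) * (t2 - t1)) / sqrt ((t2 - t1) * (t3 - t2) * ((t2 - t1) + (t3 - t2)))"
  unfolding eta_def by simp

lemma bm_eta:
  assumes bm: "brownian_motion M W" and t: "0 \<le> t1" "t1 < t2" "t2 < t3" "t3 \<le> 1"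
  shows "distributed M lborel (eta W (t1, t2, t3)) std_normal_density"
proof -
  interpret prob_space M using bm_prob_space[OF bm] .
  have "distributed M lborel (\<lambda>\<omega>. ((W t2 \<omega> - W t1 \<omega>) * (t3 - t2) - (W t3 \<omega> - W t2 \<omega>) * (t2 - t1)) / sqrt ((t2 - t1) * (t3 - t2) * ((t2 - t1) + (t3 - t2)))) std_normal_density"
    by (rule gauss_pair(2)[OF _ _ bm_incr[OF bm] bm_incr[OF bm] bm_two[OF bm t]]) (use t in auto)
  then show ?thesis unfolding eta_alt[abs_def] by simp
qed

lemma bm_core:
  assumes bm: "brownian_motion M W" and t: "0 \<le> t1" "t1 < t2" "t2 < t3" "t3 \<le> 1"
    and S: "finite S" "S \<subseteq> {0..1}" "\<And>s. s \<in> S \<Longrightarrow> \<not> (t1 < s \<and> s < t3)"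
    and A: "A \<in> sets borel" and C: "C \<in> sets (PiM S (\<lambda>_. borel))"
  shows "measure M (eta W (t1, t2, t3) -` A \<inter> (\<lambda>\<omega>. \<lambda>s\<in>S. W s \<omega> - W 0 \<omega>) -` C \<inter> space M)
       = measure M (eta W (t1, t2, t3) -` A \<inter> space M) * measure M ((\<lambda>\<omega>. \<lambda>s\<in>S. W s \<omega> - W 0 \<omega>) -` C \<inter> space M)"
proof -
  interpret prob_space M using bm_prob_space[OF bm] .
  define P where "P = S \<union> {0, 1, t1, t2, t3}"
  have Pfin: "finite P" "P \<noteq> {}" using S(1) unfolding P_def by auto
  have "\<exists>p n. (\<forall>i j. i < j \<longrightarrow> j \<le> n \<longrightarrow> p i < p (j::nat)) \<and> p ` {..n} = (P::real set)"
    by (rule enum_set[OF Pfin]) blast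
  then obtain p n where mono0: "\<forall>i j. i < j \<longrightarrow> j \<le> n \<longrightarrow> p i < p (j::nat)" and pP: "p ` {..n} = P"
    by blast
  have mono: "\<And>i j. i < j \<Longrightarrow> j \<le> n \<Longrightarrow> p i < p j" using mono0 by blast
  note mi = enum_mono_iff[OF mono0]
  have P01: "P \<subseteq> {0..1}" using S(2) t unfolding P_def by auto
  have pin: "\<And>i. i \<le> n \<Longrightarrow> p i \<in> P" using pP by auto
  have Pex: "\<And>x. x \<in> P \<Longrightarrow> \<exists>j\<le>n. p j = x" using pP by (metis atMost_iff imageE)
  have mid: "\<And>x. x \<in> P \<Longrightarrow> t1 < x \<Longrightarrow> x < t3 \<Longrightarrow> x = t2"
    using S(3) t unfolding P_def by auto
  have p0: "p 0 = 0"
  proof -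
    obtain j where j: "j \<le> n" "p j = 0" using Pex[of 0] unfolding P_def by auto
    have "p 0 \<le> p j" using mi(1)[where i=0 and j=j] j by simp
    moreover have "p 0 \<ge> 0" using pin[of 0] P01 by auto
    ultimately show ?thesis using j by simp
  qed
  have pn: "p n = 1"
  proof -
    obtain j where j: "j \<le> n" "p j = 1" using Pex[of 1] unfolding P_def by auto
    have "p j \<le> p n" using mi(1)[where i=j and j=n] j by simp
    moreover have "p n \<le> 1" using pin[of n] P01 by auto
    ultimately show ?thesis using j by simp
  qed
  obtain k where k: "k \<le> n" "p k = t1" using Pex[of t1] unfolding P_def by auto
  obtain j2 where j2: "j2 \<le> n" "p j2 = t2" using Pex[of t2] unfolding P_def by auto
  obtain j3 where j3: "j3 \<le> n" "p j3 = t3" using Pex[of t3] unfolding P_def by auto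
  have "k < j2" using mi(2)[OF k(1) j2(1)] k j2 t by simp
  have j2k: "j2 = Suc k"
  proof (rule ccontr)
    assume "j2 \<noteq> Suc k"
    then have "Suc k < j2" using \<open>k < j2\<close> by simp
    then have "p (Suc k) < t2" "t1 < p (Suc k)" using mi(2)[where i="Suc k" and j=j2] mi(2)[where i=k and j="Suc k"] j2 k by auto
    moreover have "p (Suc k) \<in> P" using pin \<open>Suc k < j2\<close> j2 by simp
    ultimately show False using mid[of "p (Suc k)"] t by simp
  qed
  have "j2 < j3" using mi(2)[OF j2(1) j3(1)] j2 j3 t by simp
  have j3k: "j3 = Suc (Suc k)"
  proof (rule ccontr)
    assume "j3 \<noteq> Suc (Suc k)"
    then have "Suc j2 < j3" using \<open>j2 < j3\<close> j2k by simp
    then have "p (Suc j2) < t3" "t2 < p (Suc j2)" using mi(2)[where i="Suc j2" and j=j3] mi(2)[where i=j2 and j="Suc j2"] j2 j3 by auto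
    moreover have "p (Suc j2) \<in> P" using pin \<open>Suc j2 < j3\<close> j3 by simp
    ultimately show False using mid[of "p (Suc j2)"] t by simp
  qed
  have kn: "Suc (Suc k) \<le> n" using j3 j3k by simp
  define \<Delta> where "\<Delta> = (\<lambda>i \<omega>. W (p (Suc i)) \<omega> - W (p i) \<omega>)"
  have Ind: "indep_vars (\<lambda>_. borel) \<Delta> {..<n}"
    unfolding \<Delta>_def by (rule bm_indep[OF bm]) (use p0 pn mono in auto)
  define R where "R = {..<n} - {k, Suc k}"
  define V1 where "V1 = (\<lambda>\<omega>. restrict (\<lambda>i. \<Delta> i \<omega>) {k, Suc k})"
  define V2 where "V2 = (\<lambda>\<omega>. restrict (\<lambda>i. \<Delta> i \<omega>) R)"
  have IV: "indep_var (PiM {k, Suc k} (\<lambda>_. borel)) V1 (PiM R (\<lambda>_. borel)) V2"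
    unfolding V1_def V2_def by (rule indep_var_restrict[OF Ind]) (use kn in \<open>auto simp: R_def\<close>)
  define a where "a = t2 - t1"
  define b where "b = t3 - t2"
  define f where "f = (\<lambda>v::nat \<Rightarrow> real. (v k * b - v (Suc k) * a) / sqrt (a * b * (a + b)))"
  define g where "g = (\<lambda>v::nat \<Rightarrow> real. v k + v (Suc k))"
  have fm: "f \<in> borel_measurable (PiM {k, Suc k} (\<lambda>_. borel))" unfolding f_def by measurable
  have gm: "g \<in> borel_measurable (PiM {k, Suc k} (\<lambda>_. borel))" unfolding g_def by measurable
  have fV1: "(\<lambda>\<omega>. f (V1 \<omega>)) = (\<lambda>\<omega>. ((W t2 \<omega> - W t1 \<omega>) * b - (W t3 \<omega> - W t2 \<omega>) * a) / sqrt (a * b * (a + b)))"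
    unfolding f_def V1_def \<Delta>_def using k j2 j3 j2k j3k by simp
  have gV1: "(\<lambda>\<omega>. g (V1 \<omega>)) = (\<lambda>\<omega>. (W t2 \<omega> - W t1 \<omega>) + (W t3 \<omega> - W t2 \<omega>))"
    unfolding g_def V1_def \<Delta>_def using k j2 j3 j2k j3k by simp
  have fg: "indep_var borel (\<lambda>\<omega>. f (V1 \<omega>)) borel (\<lambda>\<omega>. g (V1 \<omega>))"
    unfolding fV1 gV1 a_def b_def
    by (rule indep_var_swap, rule gauss_pair(1)[OF _ _ bm_incr[OF bm] bm_incr[OF bm] bm_two[OF bm t]]) (use t in auto)
  have eta_eq: "eta W (t1, t2, t3) = (\<lambda>\<omega>. f (V1 \<omega>))"
    unfolding fV1 eta_def a_def b_def by (simp add: algebra_simps)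
  define \<Psi> where "\<Psi> = (\<lambda>x::real \<times> (nat \<Rightarrow> real). \<lambda>s\<in>S. (\<Sum>i\<in>{i\<in>R. p (Suc i) \<le> s}. snd x i) + (if t3 \<le> s then fst x else 0))"
  have \<Psi>m: "\<Psi> \<in> measurable (borel \<Otimes>\<^sub>M PiM R (\<lambda>_. borel)) (PiM S (\<lambda>_. borel))"
    unfolding \<Psi>_def
  proof (rule measurable_restrict)
    fix s assume "s \<in> S"
    have "(\<lambda>x::real \<times> (nat \<Rightarrow> real). \<Sum>i\<in>{i\<in>R. p (Suc i) \<le> s}. snd x i) \<in> borel_measurable (borel \<Otimes>\<^sub>M PiM R (\<lambda>_. borel))"
    proof (rule borel_measurable_sum)
      fix i assume "i \<in> {i\<in>R. p (Suc i) \<le> s}"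
      then have "i \<in> R" by simp
      then show "(\<lambda>x::real \<times> (nat \<Rightarrow> real). snd x i) \<in> borel_measurable (borel \<Otimes>\<^sub>M PiM R (\<lambda>_. borel))" by measurable
    qed
    moreover have "(\<lambda>x::real \<times> (nat \<Rightarrow> real). if t3 \<le> s then fst x else 0) \<in> borel_measurable (borel \<Otimes>\<^sub>M PiM R (\<lambda>_. borel))"
      by (cases "t3 \<le> s") simp_all
    ultimately show "(\<lambda>x::real \<times> (nat \<Rightarrow> real). (\<Sum>i\<in>{i\<in>R. p (Suc i) \<le> s}. snd x i) + (if t3 \<le> s then fst x else 0)) \<in> borel_measurable (borel \<Otimes>\<^sub>M PiM R (\<lambda>_. borel))"
      by (rule borel_measurable_add)
  qed
  have Wm: "\<And>s. s \<in> P \<Longrightarrow> W s \<in> borel_measurable M" using bm_meas[OF bm] P01 by auto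
  have V1m: "V1 \<in> measurable M (PiM {k, Suc k} (\<lambda>_. borel))" using indep_var_rv1[OF IV] .
  have V2m: "V2 \<in> measurable M (PiM R (\<lambda>_. borel))" using indep_var_rv2[OF IV] .
  have YPsi: "(\<lambda>s\<in>S. W s \<omega> - W 0 \<omega>) = \<Psi> (g (V1 \<omega>), V2 \<omega>)" for \<omega>
  proof (rule ext)
    fix s
    show "(\<lambda>s\<in>S. W s \<omega> - W 0 \<omega>) s = \<Psi> (g (V1 \<omega>), V2 \<omega>) s"
    proof (cases "s \<in> S")
      case False then show ?thesis unfolding \<Psi>_def by simp
    next
      case True
      then obtain j where j: "j \<le> n" "p j = s" using Pex unfolding P_def by blast
      have jk: "j \<noteq> Suc k" using S(3)[OF True] j j2 j2k t by auto
      have set_eq: "{i\<in>R. p (Suc i) \<le> s} = {..<j} - {k, Suc k}"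
      proof -
        have "\<And>i. i < n \<Longrightarrow> p (Suc i) \<le> p j \<longleftrightarrow> Suc i \<le> j"
        proof -
          fix i assume "i < n" then have "Suc i \<le> n" by simp
          then show "p (Suc i) \<le> p j \<longleftrightarrow> Suc i \<le> j" using mi(1)[OF _ j(1)] by blast
        qed
        then show ?thesis unfolding R_def using j by auto
      qed
      have t3s: "t3 \<le> s \<longleftrightarrow> Suc (Suc k) \<le> j" using mi(1)[where i="Suc (Suc k)" and j=j] kn j j3 j3k by simp
      have sumR: "(\<Sum>i\<in>{..<j} - {k, Suc k}. V2 \<omega> i) = (\<Sum>i\<in>{..<j} - {k, Suc k}. \<Delta> i \<omega>)"
        unfolding V2_def R_def using j by (intro sum.cong) auto
      have "(\<Sum>i\<in>{..<j} - {k, Suc k}. \<Delta> i \<omega>) + (if Suc (Suc k) \<le> j then \<Delta> k \<omega> + \<Delta> (Suc k) \<omega> else 0) = (\<Sum>i<j. \<Delta> i \<omega>)"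
      proof (cases "Suc (Suc k) \<le> j")
        case True
        have sub: "{k, Suc k} \<subseteq> {..<j}" using True by auto
        have "(\<Sum>i<j. \<Delta> i \<omega>) = (\<Sum>i\<in>{..<j} - {k, Suc k}. \<Delta> i \<omega>) + (\<Sum>i\<in>{k, Suc k}. \<Delta> i \<omega>)"
          using sum.subset_diff[OF sub] by simp
        then show ?thesis using True by simp
      next
        case False
        then have "j \<le> k" using jk by auto
        then have "{..<j} - {k, Suc k} = {..<j}" by auto
        then show ?thesis using False by simp
      qed
      also have "(\<Sum>i<j. \<Delta> i \<omega>) = W s \<omega> - W 0 \<omega>"
        unfolding \<Delta>_def using sum_lessThan_telescope[of "\<lambda>i. W (p i) \<omega>" j] j p0 by simp
      finally have calc: "(\<Sum>i\<in>{..<j} - {k, Suc k}. \<Delta> i \<omega>) + (if Suc (Suc k) \<le> j then \<Delta> k \<omega> + \<Delta> (Suc k) \<omega> else 0) = W s \<omega> - W 0 \<omega>" .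
      have gv: "g (V1 \<omega>) = \<Delta> k \<omega> + \<Delta> (Suc k) \<omega>" unfolding g_def V1_def by simp
      have "\<Psi> (g (V1 \<omega>), V2 \<omega>) s = (\<Sum>i\<in>{..<j} - {k, Suc k}. V2 \<omega> i) + (if Suc (Suc k) \<le> j then g (V1 \<omega>) else 0)"
        unfolding \<Psi>_def using True set_eq t3s by simp
      also have "\<dots> = (\<Sum>i\<in>{..<j} - {k, Suc k}. \<Delta> i \<omega>) + (if Suc (Suc k) \<le> j then \<Delta> k \<omega> + \<Delta> (Suc k) \<omega> else 0)"
        unfolding sumR gv ..
      also have "\<dots> = W s \<omega> - W 0 \<omega>" by (rule calc)
      finally show ?thesis using True by simp
    qed
  qed
  define C' where "C' = \<Psi> -` C \<inter> space (borel \<Otimes>\<^sub>M PiM R (\<lambda>_. borel))"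
  have C': "C' \<in> sets (borel \<Otimes>\<^sub>M PiM R (\<lambda>_. borel))" unfolding C'_def using \<Psi>m C by (rule measurable_sets)
  have GV: "(\<lambda>\<omega>. (g (V1 \<omega>), V2 \<omega>)) \<in> measurable M (borel \<Otimes>\<^sub>M PiM R (\<lambda>_. borel))"
    using V1m V2m gm by measurable
  have pre: "(\<lambda>\<omega>. \<lambda>s\<in>S. W s \<omega> - W 0 \<omega>) -` C \<inter> space M = (\<lambda>\<omega>. (g (V1 \<omega>), V2 \<omega>)) -` C' \<inter> space M"
    unfolding C'_def using YPsi measurable_space[OF GV] by auto
  have main: "prob ((\<lambda>\<omega>. f (V1 \<omega>)) -` A \<inter> (\<lambda>\<omega>. (g (V1 \<omega>), V2 \<omega>)) -` C' \<inter> space M)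
       = prob ((\<lambda>\<omega>. f (V1 \<omega>)) -` A \<inter> space M) * prob ((\<lambda>\<omega>. (g (V1 \<omega>), V2 \<omega>)) -` C' \<inter> space M)"
    by (rule indep_var_pair_extend[OF IV fg fm gm A C'])
  have "eta W (t1, t2, t3) -` A \<inter> (\<lambda>\<omega>. \<lambda>s\<in>S. W s \<omega> - W 0 \<omega>) -` C \<inter> space M
      = (\<lambda>\<omega>. f (V1 \<omega>)) -` A \<inter> (\<lambda>\<omega>. (g (V1 \<omega>), V2 \<omega>)) -` C' \<inter> space M"
    using pre unfolding eta_eq by (simp add: Int_assoc)
  then show ?thesis using main pre eta_eq by simp
qed

lemma points_outside:
  assumes fr: "finitely_refining \<pi>"
    and j: "(t1, t2, t3) \<in> schauder_triples \<pi> m"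
    and i: "(a, b, c) \<in> schauder_triples \<pi> m'"
    and le: "m' \<le> m" and t3c: "m' = m \<Longrightarrow> t3 \<le> c"
    and ne: "(m', (a, b, c)) \<noteq> (m, (t1, t2, t3))"
    and x: "x \<in> {a, b, c}"
  shows "\<not> (t1 < x \<and> x < t3)"
proof -
  note J = triple_props[OF fr j]
  note Ip = triple_props[OF fr i]
  show ?thesis
  proof (cases "m' < m")
    case True
    then have "\<pi> (Suc m') \<subseteq> \<pi> m" using fr_mono[OF fr, of "Suc m'" m] by simp
    then have "x \<in> \<pi> m" using x Ip by auto
    then show ?thesis using J(9) by blast
  next
    case False
    then have mm: "m' = m" using le by simp
    have "c \<noteq> t3"
    proof
      assume "c = t3"
      then have "a = t1 \<and> b = t2" using triple_unique_t3[OF fr i] j mm by auto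
      then show False using ne mm \<open>c = t3\<close> by simp
    qed
    then have ct: "t3 < c" using t3c[OF mm] by simp
    have bt: "t3 \<le> b"
    proof (rule ccontr)
      assume "\<not> t3 \<le> b"
      then have "b < t3" by simp
      moreover have "t3 \<in> \<pi> (Suc m')" using J(8) mm by simp
      ultimately show False using consecutive_between[OF Ip(10)] ct by blast
    qed
    have "a \<in> \<pi> m" using Ip(5) mm by simp
    then have "\<not> (t1 < a \<and> a < t3)" using J(9) by blast
    then show ?thesis using x ct bt by auto
  qed
qed

lemma (in prob_space) indep_vars_finite_subsets:
  assumes rv: "\<And>i. i \<in> I \<Longrightarrow> random_variable (M' i) (X i)"
    and fin: "\<And>J. J \<subseteq> I \<Longrightarrow> finite J \<Longrightarrow> J \<noteq> {} \<Longrightarrow> indep_vars M' X J"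
  shows "indep_vars M' X I"
  unfolding indep_vars_def2
proof (intro conjI ballI rv)
  show "indep_sets (\<lambda>i. {X i -` A \<inter> space M |A. A \<in> sets (M' i)}) I"
    by (subst indep_sets_finite_index_sets) (use fin in \<open>auto simp: indep_vars_def2\<close>)
qed

lemma eta_measurable:
  assumes fr: "finitely_refining \<pi>" and bm: "brownian_motion M W" and tr: "tr \<in> schauder_triples \<pi> m"
  shows "eta W tr \<in> borel_measurable M"
proof -
  obtain t1 t2 t3 where t: "tr = (t1, t2, t3)" by (cases tr) auto
  note P = triple_props[OF fr tr[unfolded t]]
  show ?thesis using distributed_measurable[OF bm_eta[OF bm P(1-4)]] t by simp
qed

lemma eta_indep:
  assumes fr: "finitely_refining \<pi>" and bm: "brownian_motion M W"
  shows "prob_space.indep_vars M (\<lambda>_. borel) (\<lambda>(m, tr). eta W tr) (SIGMA m:UNIV. schauder_triples \<pi> m)"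
proof -
  interpret prob_space M using bm_prob_space[OF bm] .
  define I where "I = (SIGMA m:UNIV. schauder_triples \<pi> m)"
  define X where "X = (\<lambda>(m::nat, tr). eta W tr)"
  have rv: "\<And>i. i \<in> I \<Longrightarrow> X i \<in> borel_measurable M"
    unfolding I_def X_def using eta_measurable[OF fr bm] by auto
  have "indep_vars (\<lambda>_. borel) X I"
  proof (rule indep_vars_finite_subsets)
    show "\<And>i. i \<in> I \<Longrightarrow> random_variable borel (X i)" using rv by simp
    fix J assume J: "J \<subseteq> I" "finite J" "J \<noteq> {}"
    show "indep_vars (\<lambda>_. borel) X J"
    proof (rule indep_vars_chain[OF J(2)])
      show "\<And>i. i \<in> J \<Longrightarrow> X i \<in> borel_measurable M" using rv J by auto
      fix K assume K: "K \<subseteq> J" "K \<noteq> {}"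
      have Kfin: "finite K" using K J finite_subset by blast
      define m0 where "m0 = Max (fst ` K)"
      have m0in: "m0 \<in> fst ` K" unfolding m0_def using Kfin K by (intro Max_in) auto
      have m0max: "\<And>i. i \<in> K \<Longrightarrow> fst i \<le> m0" unfolding m0_def using Kfin by auto
      define K0 where "K0 = {tr. (m0, tr) \<in> K}"
      have K0fin: "finite K0" "K0 \<noteq> {}"
      proof -
        have "K0 = snd ` (K \<inter> {i. fst i = m0})" unfolding K0_def by force
        then show "finite K0" using Kfin by simp
        show "K0 \<noteq> {}" using m0in unfolding K0_def by force
      qed
      define c0 where "c0 = Min ((\<lambda>tr. snd (snd tr)) ` K0)"
      have "c0 \<in> (\<lambda>tr. snd (snd tr)) ` K0" unfolding c0_def using K0fin by (intro Min_in) auto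
      then obtain t1 t2 t3 where j0: "(t1, t2, t3) \<in> K0" and c0t: "c0 = t3" by force
      have c0min: "\<And>tr. tr \<in> K0 \<Longrightarrow> t3 \<le> snd (snd tr)"
      proof -
        fix tr assume "tr \<in> K0"
        then have "c0 \<le> snd (snd tr)" unfolding c0_def using K0fin by (intro Min_le) auto
        then show "t3 \<le> snd (snd tr)" using c0t by simp
      qed
      define j where "j = (m0, (t1, t2, t3))"
      have jK: "j \<in> K" using j0 unfolding j_def K0_def by simp
      have jT: "(t1, t2, t3) \<in> schauder_triples \<pi> m0" using jK K J unfolding j_def I_def by auto
      note Jp = triple_props[OF fr jT]
      define S where "S = (\<Union>i\<in>K - {j}. {fst (snd i), fst (snd (snd i)), snd (snd (snd i))})"
      have Sfin: "finite S" unfolding S_def using Kfin by auto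
      have Sout: "\<And>s. s \<in> S \<Longrightarrow> \<not> (t1 < s \<and> s < t3)"
      proof -
        fix s assume "s \<in> S"
        then obtain m' a b c where i: "(m', (a, b, c)) \<in> K - {j}" and s: "s \<in> {a, b, c}"
          unfolding S_def by force
        have iT: "(a, b, c) \<in> schauder_triples \<pi> m'" using i K J unfolding I_def by auto
        have le: "m' \<le> m0" using m0max[of "(m', (a, b, c))"] i by simp
        have t3c: "m' = m0 \<Longrightarrow> t3 \<le> c" using c0min[of "(a, b, c)"] i unfolding K0_def by auto
        show "\<not> (t1 < s \<and> s < t3)"
          by (rule points_outside[OF fr jT iT le t3c _ s]) (use i in \<open>auto simp: j_def\<close>)
      qed
      have S01: "S \<subseteq> {0..1}"
      proof
        fix s assume "s \<in> S"
        then obtain m' a b c where i: "(m', (a, b, c)) \<in> K - {j}" and s: "s \<in> {a, b, c}"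
          unfolding S_def by force
        have iT: "(a, b, c) \<in> schauder_triples \<pi> m'" using i K J unfolding I_def by auto
        note Ip = triple_props[OF fr iT]
        show "s \<in> {0..1}" using s Ip(1-4) by auto
      qed
      define Y where "Y = (\<lambda>\<omega>. \<lambda>s\<in>S. W s \<omega> - W 0 \<omega>)"
      have Ym: "Y \<in> measurable M (PiM S (\<lambda>_. borel))"
        unfolding Y_def
      proof (rule measurable_restrict)
        fix s assume "s \<in> S"
        then have "W s \<in> borel_measurable M" "W 0 \<in> borel_measurable M" using bm_meas[OF bm] S01 by auto
        then show "(\<lambda>\<omega>. W s \<omega> - W 0 \<omega>) \<in> borel_measurable M" by simp
      qed
      have hex: "\<forall>i\<in>K-{j}. \<exists>h \<in> borel_measurable (PiM S (\<lambda>_. borel)). \<forall>\<omega>\<in>space M. X i \<omega> = h (Y \<omega>)"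
      proof
        fix i assume i: "i \<in> K - {j}"
        obtain m' a b c where ie: "i = (m', (a, b, c))" by (cases i) auto
        have abc: "a \<in> S" "b \<in> S" "c \<in> S" unfolding S_def using i ie by force+
        define h where "h = (\<lambda>v::real \<Rightarrow> real. ((v b - v a) * (c - b) - (v c - v b) * (b - a)) / sqrt ((b - a) * (c - b) * (c - a)))"
        have hm: "h \<in> borel_measurable (PiM S (\<lambda>_. borel))" unfolding h_def using abc by measurable
        have "\<forall>\<omega>\<in>space M. X i \<omega> = h (Y \<omega>)"
          unfolding X_def ie h_def Y_def eta_def using abc by (simp add: algebra_simps)
        then show "\<exists>h \<in> borel_measurable (PiM S (\<lambda>_. borel)). \<forall>\<omega>\<in>space M. X i \<omega> = h (Y \<omega>)" using hm by blast
      qed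
      have ind: "\<forall>A\<in>sets borel. \<forall>C\<in>sets (PiM S (\<lambda>_. borel)). prob (X j -` A \<inter> Y -` C \<inter> space M) = prob (X j -` A \<inter> space M) * prob (Y -` C \<inter> space M)"
        unfolding X_def j_def Y_def using bm_core[OF bm Jp(1-4) Sfin S01 Sout] by simp
      show "\<exists>j\<in>K. \<exists>(N::(real \<Rightarrow> real) measure) Y. Y \<in> measurable M N \<and>
        (\<forall>i\<in>K-{j}. \<exists>h \<in> borel_measurable N. \<forall>\<omega>\<in>space M. X i \<omega> = h (Y \<omega>)) \<and>
        (\<forall>A\<in>sets borel. \<forall>C\<in>sets N. prob (X j -` A \<inter> Y -` C \<inter> space M) = prob (X j -` A \<inter> space M) * prob (Y -` C \<inter> space M))"
        using jK Ym hex ind by blast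
    qed
  qed
  then show ?thesis unfolding I_def X_def .
qed

lemma ind_has_integral:
  fixes a b c d :: real
  shows "((\<lambda>x. if x \<in> {a..b} then 1 else 0) has_integral (max 0 (min b d - max a c))) {c..d}"
proof -
  have "((\<lambda>x. 1::real) has_integral (max 0 (min b d - max a c))) ({a..b} \<inter> {c..d})"
  proof -
    have h: "((\<lambda>x. 1::real) has_integral (Henstock_Kurzweil_Integration.content {max a c..min b d} *\<^sub>R 1)) {max a c..min b d}"
      by (rule has_integral_const_real)
    have aux: "\<And>x y::real. (if x \<le> y then y - x else 0) = max 0 (y - x)" by auto
    show ?thesis using h by (simp only: content_real_if aux Int_atLeastAtMost real_scaleR_def mult_1_right)
  qed
  then show ?thesis by (subst has_integral_restrict_Int) simp
qed

definition alpha3 :: "real \<Rightarrow> real \<Rightarrow> real \<Rightarrow> real" where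
  "alpha3 t1 t2 t3 = sqrt ((t3 - t2) / ((t2 - t1) * (t3 - t1)))"
definition beta3 :: "real \<Rightarrow> real \<Rightarrow> real \<Rightarrow> real" where
  "beta3 t1 t2 t3 = sqrt ((t2 - t1) / ((t3 - t2) * (t3 - t1)))"

lemma schauder_fun_eq:
  assumes "t1 < t2" "t2 < t3"
  shows "schauder_fun (t1, t2, t3) t = alpha3 t1 t2 t3 * max 0 (min t2 t - max t1 0) - beta3 t1 t2 t3 * max 0 (min t3 t - max t2 0)"
proof -
  let ?f = "\<lambda>x. alpha3 t1 t2 t3 * (if x \<in> {t1..t2} then 1 else 0) - beta3 t1 t2 t3 * (if x \<in> {t2..t3} then 1 else 0)"
  have I1: "(?f has_integral (alpha3 t1 t2 t3 * max 0 (min t2 t - max t1 0) - beta3 t1 t2 t3 * max 0 (min t3 t - max t2 0))) {0..t}"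
    by (intro has_integral_diff has_integral_mult_right ind_has_integral)
  have E1: "\<And>x. x \<in> {0..t} - {t2, t3} \<Longrightarrow> haar_fun (t1, t2, t3) x = ?f x"
  proof -
    fix x assume x: "x \<in> {0..t} - {t2, t3}"
    then have x23: "x \<noteq> t2" "x \<noteq> t3" by auto
    consider "x < t1" | "t1 \<le> x \<and> x < t2" | "t2 < x \<and> x < t3" | "t3 < x" using x23 by linarith
    then show "haar_fun (t1, t2, t3) x = ?f x"
    proof cases
      case 1 then show ?thesis using assms unfolding haar_fun_def by simp
    next
      case 2 then show ?thesis using assms unfolding haar_fun_def alpha3_def by simp
    next
      case 3 then show ?thesis using assms unfolding haar_fun_def beta3_def by simp
    next
      case 4 then show ?thesis using assms unfolding haar_fun_def by simp
    qed
  qed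
  have "(haar_fun (t1, t2, t3) has_integral (alpha3 t1 t2 t3 * max 0 (min t2 t - max t1 0) - beta3 t1 t2 t3 * max 0 (min t3 t - max t2 0))) {0..t}"
    by (rule has_integral_spike_finite[where S="{t2, t3}", OF _ E1 I1]) simp
  then show ?thesis unfolding schauder_fun_def by (rule integral_unique)
qed

definition lin :: "(real \<Rightarrow> real) \<Rightarrow> real \<Rightarrow> real \<Rightarrow> real \<Rightarrow> real" where
  "lin w a b t = w a + (w b - w a) * (t - a) / (b - a)"

lemma alpha_beta_eq:
  assumes "t1 < t2" "t2 < t3"
  shows "alpha3 t1 t2 t3 = (t3 - t2) / sqrt ((t2 - t1) * (t3 - t2) * (t3 - t1))"
    and "beta3 t1 t2 t3 = (t2 - t1) / sqrt ((t2 - t1) * (t3 - t2) * (t3 - t1))"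
proof -
  define a where "a = t2 - t1"
  define b where "b = t3 - t2"
  have a: "a > 0" and b: "b > 0" using assms unfolding a_def b_def by auto
  have ab: "t3 - t1 = a + b" unfolding a_def b_def by simp
  have "b * b / (a * b * (a + b)) = b * b / (b * (a * (a + b)))" by (simp add: ac_simps)
  also have "\<dots> = b / (a * (a + b))" using b by simp
  finally have "b / (a * (a + b)) = b * b / (a * b * (a + b))" by simp
  then have "sqrt (b / (a * (a + b))) = sqrt (b * b / (a * b * (a + b)))" by simp
  also have "\<dots> = b / sqrt (a * b * (a + b))" using b by (simp only: real_sqrt_divide real_sqrt_abs2 abs_of_pos)
  finally have 1: "sqrt (b / (a * (a + b))) = b / sqrt (a * b * (a + b))" .
  have "a * a / (a * b * (a + b)) = a * a / (a * (b * (a + b)))" by (simp add: ac_simps)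
  also have "\<dots> = a / (b * (a + b))" using a by simp
  finally have "a / (b * (a + b)) = a * a / (a * b * (a + b))" by simp
  then have "sqrt (a / (b * (a + b))) = sqrt (a * a / (a * b * (a + b)))" by simp
  also have "\<dots> = a / sqrt (a * b * (a + b))" using a by (simp only: real_sqrt_divide real_sqrt_abs2 abs_of_pos)
  finally have 2: "sqrt (a / (b * (a + b))) = a / sqrt (a * b * (a + b))" .
  show "alpha3 t1 t2 t3 = (t3 - t2) / sqrt ((t2 - t1) * (t3 - t2) * (t3 - t1))"
    unfolding alpha3_def ab using 1 unfolding a_def b_def by simp
  show "beta3 t1 t2 t3 = (t2 - t1) / sqrt ((t2 - t1) * (t3 - t2) * (t3 - t1))"
    unfolding beta3_def ab using 2 unfolding a_def b_def by simp
qed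

lemma alg1:
  fixes a b u w1 w2 w3 :: real assumes a: "a > 0" and b: "b > 0"
  shows "((w2 - w1) * b - (w3 - w2) * a) * b * u / (a * b * (a + b)) = (w2 - w1) * u / a - (w3 - w1) * u / (a + b)"
proof -
  have nz: "a \<noteq> 0" "b \<noteq> 0" "a + b \<noteq> 0" using a b by auto
  have "((w2 - w1) * b - (w3 - w2) * a) * b * u / (a * b * (a + b)) = (b * (((w2 - w1) * b - (w3 - w2) * a) * u)) / (b * (a * (a + b)))"
    by (simp add: ac_simps)
  also have "\<dots> = (((w2 - w1) * b - (w3 - w2) * a) * u) / (a * (a + b))" using nz by simp
  also have "\<dots> = ((w2 - w1) * u * (a + b) - (w3 - w1) * u * a) / (a * (a + b))"
    by (simp add: algebra_simps)
  also have "\<dots> = (w2 - w1) * u / a - (w3 - w1) * u / (a + b)"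
    using nz by (simp add: diff_frac_eq)
  finally show ?thesis .
qed

lemma alg2:
  fixes a b u w1 w2 w3 :: real assumes a: "a > 0" and b: "b > 0"
  shows "((w2 - w1) * b - (w3 - w2) * a) * a * (b - u) / (a * b * (a + b)) = (w2 + (w3 - w2) * u / b) - (w1 + (w3 - w1) * (a + u) / (a + b))"
proof -
  have nz: "a \<noteq> 0" "b \<noteq> 0" "a + b \<noteq> 0" using a b by auto
  have "((w2 - w1) * b - (w3 - w2) * a) * a * (b - u) / (a * b * (a + b)) = (a * (((w2 - w1) * b - (w3 - w2) * a) * (b - u))) / (a * (b * (a + b)))"
    by (simp add: ac_simps)
  also have "\<dots> = (((w2 - w1) * b - (w3 - w2) * a) * (b - u)) / (b * (a + b))" using nz by simp
  also have "\<dots> = ((w2 - w1) * b * (a + b) + (w3 - w2) * u * (a + b) - (w3 - w1) * (a + u) * b) / (b * (a + b))"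
    by (simp add: algebra_simps)
  also have "\<dots> = (w2 - w1) + (w3 - w2) * u / b - (w3 - w1) * (a + u) / (a + b)"
    using nz by (simp add: add_divide_distrib diff_divide_distrib)
  also have "\<dots> = (w2 + (w3 - w2) * u / b) - (w1 + (w3 - w1) * (a + u) / (a + b))" by simp
  finally show ?thesis .
qed

lemma hat_formula:
  assumes t: "0 \<le> t1" "t1 < t2" "t2 < t3" "0 \<le> t"
  shows "eta W (t1, t2, t3) \<omega> * schauder_fun (t1, t2, t3) t =
    (if t \<le> t1 \<or> t3 \<le> t then 0
     else if t \<le> t2 then lin (\<lambda>s. W s \<omega>) t1 t2 t - lin (\<lambda>s. W s \<omega>) t1 t3 t
     else lin (\<lambda>s. W s \<omega>) t2 t3 t - lin (\<lambda>s. W s \<omega>) t1 t3 t)"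
proof -
  define a where "a = t2 - t1"
  define b where "b = t3 - t2"
  have a: "a > 0" and b: "b > 0" using t unfolding a_def b_def by auto
  define r where "r = sqrt (a * b * (a + b))"
  have r: "r > 0" using a b unfolding r_def by simp
  have r2: "r * r = a * b * (a + b)" unfolding r_def using a b by simp
  have ab: "t3 - t1 = a + b" unfolding a_def b_def by simp
  have al: "alpha3 t1 t2 t3 = b / r" and be: "beta3 t1 t2 t3 = a / r"
    using alpha_beta_eq[OF t(2,3)] unfolding r_def a_def b_def by (simp_all add: algebra_simps)
  define N where "N = (W t2 \<omega> - W t1 \<omega>) * b - (W t3 \<omega> - W t2 \<omega>) * a"
  have eta: "eta W (t1, t2, t3) \<omega> = N / r" unfolding eta_def N_def r_def a_def b_def
    by (simp add: algebra_simps)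
  have sf: "schauder_fun (t1, t2, t3) t = b / r * max 0 (min t2 t - t1) - a / r * max 0 (min t3 t - t2)"
    using schauder_fun_eq[OF t(2,3), of t] al be t by simp
  consider "t \<le> t1" | "t1 < t \<and> t \<le> t2" | "t2 < t \<and> t < t3" | "t3 \<le> t" by linarith
  then show ?thesis
  proof cases
    case 1
    then have "schauder_fun (t1, t2, t3) t = 0" unfolding sf using t by (simp add: max_def min_def)
    then show ?thesis using 1 by simp
  next
    case 2
    have "schauder_fun (t1, t2, t3) t = b / r * (t - t1)"
    proof (cases "t = t2")
      case True then show ?thesis unfolding sf using t by (simp add: max_def min_def)
    next
      case False then show ?thesis unfolding sf using t 2 by (simp add: max_def min_def)
    qed
    then have "eta W (t1, t2, t3) \<omega> * schauder_fun (t1, t2, t3) t = N / r * (b / r * (t - t1))" unfolding eta by simp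
    also have "\<dots> = N * b * (t - t1) / (r * r)" by simp
    also have "\<dots> = N * b * (t - t1) / (a * b * (a + b))" unfolding r2 ..
    also have "\<dots> = lin (\<lambda>s. W s \<omega>) t1 t2 t - lin (\<lambda>s. W s \<omega>) t1 t3 t"
      unfolding lin_def N_def ab alg1[OF a b] unfolding a_def b_def by simp
    finally show ?thesis using 2 t by simp
  next
    case 3
    then have "schauder_fun (t1, t2, t3) t = b / r * a - a / r * (t - t2)" unfolding sf using t unfolding a_def by (simp add: max_def min_def)
    then have "eta W (t1, t2, t3) \<omega> * schauder_fun (t1, t2, t3) t = N / r * (b / r * a - a / r * (t - t2))" unfolding eta by simp
    also have "\<dots> = N * a * (b - (t - t2)) / (r * r)" using r by (simp add: field_simps)
    also have "\<dots> = N * a * (b - (t - t2)) / (a * b * (a + b))" unfolding r2 ..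
    also have "\<dots> = lin (\<lambda>s. W s \<omega>) t2 t3 t - lin (\<lambda>s. W s \<omega>) t1 t3 t"
      unfolding lin_def N_def ab alg2[OF a b] unfolding a_def b_def by simp
    finally show ?thesis using 3 t by simp
  next
    case 4
    then have "schauder_fun (t1, t2, t3) t = b / r * a - a / r * b" unfolding sf using t unfolding a_def b_def by (simp add: max_def min_def)
    then have "schauder_fun (t1, t2, t3) t = 0" by simp
    then show ?thesis using 4 by simp
  qed
qed

definition Lp :: "(real \<Rightarrow> real) \<Rightarrow> real set \<Rightarrow> real \<Rightarrow> real" where
  "Lp w P t = (SOME v. \<exists>a b. consecutive P a b \<and> a \<le> t \<and> t \<le> b \<and> v = lin w a b t)"

lemma lin_left[simp]: "lin w a b a = w a" unfolding lin_def by simp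
lemma lin_right: "a \<noteq> b \<Longrightarrow> lin w a b b = w b" unfolding lin_def by simp

lemma lin_consistent:
  assumes ab: "consecutive P a b" "a \<le> t" "t \<le> b" and ab': "consecutive P a' b'" "a' \<le> t" "t \<le> b'"
  shows "lin w a b t = lin w a' b' t"
proof -
  have lend: "lin w x y t = w t" if "consecutive P x y" "x \<le> t" "t \<le> y" "t = x \<or> t = y" for x y
    using that lin_right[of x y w] unfolding consecutive_def by auto
  show ?thesis
  proof (cases "a < t \<and> t < b")
    case True
    show ?thesis
    proof (cases "a' < t \<and> t < b'")
      case True
      then have "a = a' \<and> b = b'" using consecutive_overlap[OF ab(1) ab'(1)] \<open>a < t \<and> t < b\<close> by blast
      then show ?thesis by simp
    next
      case False
      then have "t = a' \<or> t = b'" using ab' by auto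
      then have "t \<in> P" using ab' unfolding consecutive_def by auto
      then show ?thesis using consecutive_between[OF ab(1)] True by blast
    qed
  next
    case False
    then have ta: "t = a \<or> t = b" using ab by auto
    then have tP: "t \<in> P" using ab unfolding consecutive_def by auto
    have "\<not> (a' < t \<and> t < b')" using consecutive_between[OF ab'(1) tP] by blast
    then have "t = a' \<or> t = b'" using ab' by auto
    then show ?thesis using lend[OF ab ta] lend[OF ab'] by simp
  qed
qed

lemma Lp_eq:
  assumes "consecutive P a b" "a \<le> t" "t \<le> b"
  shows "Lp w P t = lin w a b t"
  unfolding Lp_def
proof (rule someI2)
  show "\<exists>a' b'. consecutive P a' b' \<and> a' \<le> t \<and> t \<le> b' \<and> lin w a b t = lin w a' b' t" using assms by blast
next
  fix v assume "\<exists>a' b'. consecutive P a' b' \<and> a' \<le> t \<and> t \<le> b' \<and> v = lin w a' b' t"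
  then show "v = lin w a b t" using lin_consistent[OF assms] by metis
qed

lemma level_sum:
  assumes fr: "finitely_refining \<pi>" and t: "0 \<le> t" "t \<le> 1"
  shows "(\<Sum>tr\<in>schauder_triples \<pi> m. eta W tr \<omega> * schauder_fun tr t)
       = Lp (\<lambda>s. W s \<omega>) (\<pi> (Suc m)) t - Lp (\<lambda>s. W s \<omega>) (\<pi> m) t"
proof -
  define w where "w = (\<lambda>s. W s \<omega>)"
  define H where "H = (\<lambda>tr. eta W tr \<omega> * schauder_fun tr t)"
  have Pm: "is_partition (\<pi> m)" and Pm1: "is_partition (\<pi> (Suc m))" using fr_partition[OF fr] by auto
  obtain u0 ur where U: "consecutive (\<pi> m) u0 ur" "u0 \<le> t" "t \<le> ur"
    using consecutive_cover[OF Pm t] by blast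
  have u01: "0 \<le> u0" "u0 < ur" "ur \<le> 1" using consecutive_in01[OF Pm U(1)] by auto
  have sub: "\<pi> m \<subseteq> \<pi> (Suc m)" using fr unfolding finitely_refining_def by auto
  have Hhat: "H (t1, t2, t3) = (if t \<le> t1 \<or> t3 \<le> t then 0
     else if t \<le> t2 then lin w t1 t2 t - lin w t1 t3 t
     else lin w t2 t3 t - lin w t1 t3 t)" if "(t1, t2, t3) \<in> schauder_triples \<pi> m" for t1 t2 t3
    unfolding H_def w_def using hat_formula[of t1 t2 t3 t W \<omega>] triple_props[OF fr that] t by simp
  \<comment> \<open>only triples starting at u0 contribute\<close>
  define T0 where "T0 = {tr \<in> schauder_triples \<pi> m. fst tr = u0}"
  have Tfin: "finite (schauder_triples \<pi> m)" by (rule triple_finite[OF fr])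
  have zero: "H tr = 0" if tr: "tr \<in> schauder_triples \<pi> m - T0" for tr
  proof -
    obtain t1 t2 t3 where tre: "tr = (t1, t2, t3)" by (cases tr) auto
    have trT: "(t1, t2, t3) \<in> schauder_triples \<pi> m" and ne: "t1 \<noteq> u0" using tr unfolding tre T0_def by auto
    obtain ur' where ur': "consecutive (\<pi> m) t1 ur'" "t1 < t2" "t2 < ur'" "t3 \<le> ur'"
      using trT unfolding schauder_triples_def by auto
    note TP = triple_props[OF fr trT]
    have "\<not> (t1 < t \<and> t < t3)"
    proof
      assume tt: "t1 < t \<and> t < t3"
      show False
      proof (cases "u0 < t \<and> t < ur")
        case True
        then have "u0 = t1" using consecutive_overlap[OF U(1) ur'(1), of t] tt ur' by auto
        then show False using ne by simp
      next
        case False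
        then have "t = u0 \<or> t = ur" using U by auto
        then have "t \<in> \<pi> m" using U(1) unfolding consecutive_def by auto
        then show False using TP(9) tt by blast
      qed
    qed
    then show ?thesis unfolding tre using Hhat[OF trT] by auto
  qed
  have sum1: "(\<Sum>tr\<in>schauder_triples \<pi> m. H tr) = (\<Sum>tr\<in>T0. H tr)"
    by (rule sum.mono_neutral_right[OF Tfin]) (use zero in \<open>auto simp: T0_def\<close>)
  define Q where "Q = \<pi> (Suc m) \<inter> {u0..ur}"
  have Qfin: "finite Q" "Q \<noteq> {}" using Pm1 U(1) sub unfolding Q_def is_partition_def consecutive_def by auto
  have "\<exists>p n. (\<forall>i j. i < j \<longrightarrow> j \<le> n \<longrightarrow> p i < p (j::nat)) \<and> p ` {..n} = Q"
    by (rule enum_set[OF Qfin]) blast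
  then obtain q r where mono0: "\<forall>i j. i < j \<longrightarrow> j \<le> r \<longrightarrow> q i < q (j::nat)" and qQ: "q ` {..r} = Q"
    by blast
  note mi = enum_mono_iff[OF mono0]
  have qin: "\<And>i. i \<le> r \<Longrightarrow> q i \<in> Q" using qQ by auto
  have Qex: "\<And>x. x \<in> Q \<Longrightarrow> \<exists>j\<le>r. q j = x" using qQ by (metis atMost_iff imageE)
  have u0Q: "u0 \<in> Q" and urQ: "ur \<in> Q" using U(1) sub u01 unfolding Q_def consecutive_def by auto
  have q0: "q 0 = u0"
  proof -
    obtain j where j: "j \<le> r" "q j = u0" using Qex[OF u0Q] by auto
    have "q 0 \<le> q j" using mi(1)[where i=0 and j=j] j by simp
    moreover have "q 0 \<ge> u0" using qin[of 0] unfolding Q_def by auto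
    ultimately show ?thesis using j by simp
  qed
  have qr: "q r = ur"
  proof -
    obtain j where j: "j \<le> r" "q j = ur" using Qex[OF urQ] by auto
    have "q j \<le> q r" using mi(1)[where i=j and j=r] j by simp
    moreover have "q r \<le> ur" using qin[of r] unfolding Q_def by auto
    ultimately show ?thesis using j by simp
  qed
  have r1: "1 \<le> r"
  proof (rule ccontr)
    assume "\<not> 1 \<le> r" then have "r = 0" by simp
    then show False using q0 qr u01 by simp
  qed
  have qP: "\<And>i. i \<le> r \<Longrightarrow> q i \<in> \<pi> (Suc m)" using qin unfolding Q_def by auto
  have qcons: "consecutive (\<pi> (Suc m)) (q j) (q (Suc j))" if j: "j < r" for j
  proof -
    have "q j < q (Suc j)" using mono0 j by simp
    moreover have "\<not> (x \<in> \<pi> (Suc m) \<and> q j < x \<and> x < q (Suc j))" for x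
    proof
      assume x: "x \<in> \<pi> (Suc m) \<and> q j < x \<and> x < q (Suc j)"
      have "q 0 \<le> q j" "q (Suc j) \<le> q r" using mi(1)[where i=0 and j=j] mi(1)[where i="Suc j" and j=r] j by auto
      then have "x \<in> Q" using x q0 qr unfolding Q_def by auto
      then obtain l where l: "l \<le> r" "q l = x" using Qex by blast
      have "j < l" "l < Suc j" using mi(2)[where i=j and j=l] mi(2)[where i=l and j="Suc j"] l x j by auto
      then show False by simp
    qed
    ultimately show ?thesis unfolding consecutive_def using qP j by auto
  qed
  define g where "g = (\<lambda>l. (u0, q (l - 1), q l))"
  have T0eq: "T0 = g ` {2..r}"
  proof
    show "T0 \<subseteq> g ` {2..r}"
    proof
      fix tr assume tr: "tr \<in> T0"
      obtain t1 t2 t3 where tre: "tr = (t1, t2, t3)" by (cases tr) auto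
      have trT: "(u0, t2, t3) \<in> schauder_triples \<pi> m" using tr unfolding tre T0_def by auto
      obtain ur' where ur': "consecutive (\<pi> m) u0 ur'" "u0 < t2" "t2 < ur'" "t2 \<in> \<pi> (Suc m)"
          "consecutive (\<pi> (Suc m)) t2 t3" "t3 \<le> ur'"
        using trT unfolding schauder_triples_def by auto
      have "ur' = ur" using consecutive_unique_right[OF ur'(1) U(1)] .
      then have "t2 \<in> Q" using ur' unfolding Q_def by auto
      then obtain j where j: "j \<le> r" "q j = t2" using Qex by blast
      have "t3 \<in> Q" using ur' \<open>ur' = ur\<close> unfolding Q_def consecutive_def by auto
      then obtain j' where j': "j' \<le> r" "q j' = t3" using Qex by blast
      have "j \<noteq> 0" proof assume "j = 0" then show False using j q0 ur'(2) by simp qed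
      have "j < r" using j qr ur' \<open>ur' = ur\<close> by (metis le_neq_implies_less order_less_irrefl)
      have "j < j'" using mi(2)[where i=j and j=j'] j j' ur'(5) unfolding consecutive_def by auto
      have "j' = Suc j"
      proof (rule ccontr)
        assume "j' \<noteq> Suc j"
        then have "Suc j < j'" using \<open>j < j'\<close> by simp
        then have "q j < q (Suc j)" "q (Suc j) < q j'" using mi(2)[where i=j and j="Suc j"] mi(2)[where i="Suc j" and j=j'] j' by auto
        moreover have "q (Suc j) \<in> \<pi> (Suc m)" using qP \<open>Suc j < j'\<close> j' by simp
        ultimately show False using consecutive_between[OF ur'(5)] j j' by blast
      qed
      have "tr = g (Suc j)" unfolding tre g_def using tr j j' \<open>j' = Suc j\<close> unfolding T0_def tre by simp
      moreover have "Suc j \<in> {2..r}" using \<open>j \<noteq> 0\<close> \<open>j < r\<close> by auto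
      ultimately show "tr \<in> g ` {2..r}" by blast
    qed
  next
    show "g ` {2..r} \<subseteq> T0"
    proof
      fix tr assume "tr \<in> g ` {2..r}"
      then obtain l where l: "l \<in> {2..r}" "tr = g l" by blast
      have l1: "l - 1 < r" "Suc (l - 1) = l" using l by auto
      have c: "consecutive (\<pi> (Suc m)) (q (l - 1)) (q l)" using qcons[OF l1(1)] unfolding l1(2) .
      have "q 0 < q (l - 1)" "q (l - 1) < q r" "q l \<le> q r"
        using mi(2)[where i=0 and j="l - 1"] mi(2)[where i="l - 1" and j=r] mi(1)[where i=l and j=r] l by auto
      then have "(u0, q (l - 1), q l) \<in> schauder_triples \<pi> m"
        unfolding schauder_triples_def using U(1) c qP[of "l - 1"] l q0 qr by auto
      then show "tr \<in> T0" unfolding l g_def T0_def by simp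
    qed
  qed
  have ginj: "inj_on g {2..r}"
  proof (rule inj_onI)
    fix x y assume "x \<in> {2..r}" "y \<in> {2..r}" "g x = g y"
    then show "x = y" unfolding g_def using mi(3)[where i=x and j=y] by auto
  qed
  have sum2: "(\<Sum>tr\<in>T0. H tr) = (\<Sum>l\<in>{2..r}. H (g l))"
    unfolding T0eq by (rule sum.reindex[OF ginj, unfolded comp_def])
  have Lq: "Lp w (\<pi> (Suc m)) t = lin w (q j) (q (Suc j)) t" if "j < r" "q j \<le> t" "t \<le> q (Suc j)" for j
    using Lp_eq[OF qcons[OF that(1)] that(2,3)] .
  have gT: "g (Suc i) \<in> schauder_triples \<pi> m" if "1 \<le> i" "i < r" for i
    using T0eq that unfolding T0_def by auto
  have claim: "(\<Sum>l\<in>{2..i}. H (g l)) = (if t \<le> q i then Lp w (\<pi> (Suc m)) t - lin w u0 (q i) t else 0)"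
    if "1 \<le> i" "i \<le> r" for i
    using that
  proof (induct i rule: dec_induct)
    case base
    have "Lp w (\<pi> (Suc m)) t = lin w u0 (q 1) t" if "t \<le> q 1"
      using Lq[of 0] r1 q0 U(2) that by simp
    then show ?case by simp
  next
    case (step i)
    have i: "1 \<le> i" "i < r" using step by auto
    have sumS: "(\<Sum>l\<in>{2..Suc i}. H (g l)) = (\<Sum>l\<in>{2..i}. H (g l)) + H (g (Suc i))"
      using i by (simp add: atLeastAtMostSuc_conv)
    have qlt: "q i < q (Suc i)" "u0 < q i" using mono0 i q0 by auto
    have Hg: "H (g (Suc i)) = (if t \<le> u0 \<or> q (Suc i) \<le> t then 0
       else if t \<le> q i then lin w u0 (q i) t - lin w u0 (q (Suc i)) t
       else lin w (q i) (q (Suc i)) t - lin w u0 (q (Suc i)) t)"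
      using Hhat[of u0 "q i" "q (Suc i)"] gT[OF i] unfolding g_def by simp
    have IH: "(\<Sum>l\<in>{2..i}. H (g l)) = (if t \<le> q i then Lp w (\<pi> (Suc m)) t - lin w u0 (q i) t else 0)"
      using step by simp
    consider "t \<le> u0" | "u0 < t \<and> t \<le> q i" | "q i < t \<and> t < q (Suc i)" | "t = q (Suc i)" | "q (Suc i) < t" by linarith
    then show ?case
    proof cases
      case 1
      then have "t = u0" using U by simp
      then show ?thesis unfolding sumS IH Hg using qlt by simp
    next
      case 2
      then show ?thesis unfolding sumS IH Hg using qlt by simp
    next
      case 3
      then show ?thesis unfolding sumS IH Hg using qlt Lq[of i] i by simp
    next
      case 4
      have "Lp w (\<pi> (Suc m)) t = lin w (q i) (q (Suc i)) t" using Lq[of i] i 4 qlt by simp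
      also have "\<dots> = w t" using 4 qlt lin_right[of "q i" "q (Suc i)" w] by simp
      finally have "Lp w (\<pi> (Suc m)) t = w t" .
      moreover have "lin w u0 (q (Suc i)) t = w t" using 4 qlt lin_right[of u0 "q (Suc i)" w] by simp
      ultimately show ?thesis unfolding sumS IH Hg using qlt 4 by simp
    next
      case 5
      then show ?thesis unfolding sumS IH Hg using qlt by simp
    qed
  qed
  have "(\<Sum>tr\<in>schauder_triples \<pi> m. H tr) = Lp w (\<pi> (Suc m)) t - lin w u0 ur t"
    unfolding sum1 sum2 using claim[OF r1 order_refl] qr U by simp
  moreover have "Lp w (\<pi> m) t = lin w u0 ur t" using Lp_eq[OF U] .
  ultimately show ?thesis unfolding H_def w_def by simp
qed

lemma lin_close:
  fixes w :: "real \<Rightarrow> real"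
  assumes ab: "a < b" "a \<le> t" "t \<le> b" and e: "\<bar>w a - w t\<bar> < e" "\<bar>w b - w t\<bar> < e"
  shows "\<bar>lin w a b t - w t\<bar> < e"
proof -
  define l where "l = (t - a) / (b - a)"
  have l: "0 \<le> l" "l \<le> 1" using ab unfolding l_def by (auto simp: divide_simps)
  have "lin w a b t = w a + (w b - w a) * l" unfolding lin_def l_def by simp
  then have "lin w a b t - w t = (1 - l) * (w a - w t) + l * (w b - w t)"
    by (simp add: algebra_simps)
  also have "\<bar>\<dots>\<bar> \<le> (1 - l) * \<bar>w a - w t\<bar> + l * \<bar>w b - w t\<bar>"
  proof -
    have "\<bar>(1 - l) * (w a - w t) + l * (w b - w t)\<bar> \<le> \<bar>(1 - l) * (w a - w t)\<bar> + \<bar>l * (w b - w t)\<bar>"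
      by (rule abs_triangle_ineq)
    also have "\<bar>(1 - l) * (w a - w t)\<bar> = (1 - l) * \<bar>w a - w t\<bar>" using l by (simp add: abs_mult)
    also have "\<bar>l * (w b - w t)\<bar> = l * \<bar>w b - w t\<bar>" using l by (simp add: abs_mult)
    finally show ?thesis .
  qed
  also have "\<dots> < e"
  proof (cases "l = 0")
    case True then show ?thesis using e by simp
  next
    case False
    then have "l > 0" using l by simp
    have "(1 - l) * \<bar>w a - w t\<bar> \<le> (1 - l) * e" using l e by (intro mult_left_mono) auto
    moreover have "l * \<bar>w b - w t\<bar> < l * e" using \<open>l > 0\<close> e by simp
    ultimately show ?thesis by (simp add: algebra_simps)
  qed
  finally show ?thesis .
qed

lemma Lp_converge:
  assumes fr: "finitely_refining \<pi>" and cont: "continuous_on {0..1} w" and t: "0 \<le> t" "t \<le> 1"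
  shows "(\<lambda>n. Lp w (\<pi> n) t) \<longlonglongrightarrow> w t"
proof (rule LIMSEQ_I)
  fix e :: real assume e: "0 < e"
  have uc: "uniformly_continuous_on {0..1} w" using compact_uniformly_continuous[OF cont] by simp
  obtain d where d: "d > 0" "\<And>x y. x \<in> {0..1} \<Longrightarrow> y \<in> {0..1} \<Longrightarrow> dist y x < d \<Longrightarrow> dist (w y) (w x) < e"
    using uc e unfolding uniformly_continuous_on_def by metis
  have "(\<lambda>n. mesh (\<pi> n)) \<longlonglongrightarrow> 0" using fr unfolding finitely_refining_def by simp
  then obtain N where N: "\<And>n. n \<ge> N \<Longrightarrow> norm (mesh (\<pi> n) - 0) < d" using LIMSEQ_D[OF _ d(1)] by metis
  show "\<exists>N. \<forall>n\<ge>N. norm (Lp w (\<pi> n) t - w t) < e"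
  proof (intro exI allI impI)
    fix n assume n: "N \<le> n"
    have P: "is_partition (\<pi> n)" using fr_partition[OF fr] .
    obtain a b where ab: "consecutive (\<pi> n) a b" "a \<le> t" "t \<le> b" using consecutive_cover[OF P t] by blast
    have ab01: "0 \<le> a" "a < b" "b \<le> 1" using consecutive_in01[OF P ab(1)] by auto
    have "b - a \<le> mesh (\<pi> n)" using consecutive_le_mesh[OF P ab(1)] .
    also have "mesh (\<pi> n) < d" using N[OF n] by simp
    finally have bad: "b - a < d" .
    have "dist a t < d" "dist b t < d" using bad ab unfolding dist_real_def by auto
    then have "dist (w a) (w t) < e" "dist (w b) (w t) < e" using d(2) ab01 t by auto
    then have "\<bar>lin w a b t - w t\<bar> < e"
      by (intro lin_close ab01(2) ab(2,3)) (auto simp: dist_real_def)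
    then show "norm (Lp w (\<pi> n) t - w t) < e" using Lp_eq[OF ab] by simp
  qed
qed

lemma det_sums:
  assumes fr: "finitely_refining \<pi>" and cont: "continuous_on {0..1} (\<lambda>s. W s \<omega>)" and t: "0 \<le> t" "t \<le> 1"
  shows "(\<lambda>m. \<Sum>tr\<in>schauder_triples \<pi> m. eta W tr \<omega> * schauder_fun tr t)
           sums (W t \<omega> - W 0 \<omega> - (W 1 \<omega> - W 0 \<omega>) * t)"
proof -
  define w where "w = (\<lambda>s. W s \<omega>)"
  have ps: "(\<Sum>m<n. \<Sum>tr\<in>schauder_triples \<pi> m. eta W tr \<omega> * schauder_fun tr t) = Lp w (\<pi> n) t - Lp w (\<pi> 0) t" for n
    unfolding w_def level_sum[OF fr t] by (rule sum_lessThan_telescope)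
  have c01: "consecutive (\<pi> 0) 0 1" using fr unfolding finitely_refining_def consecutive_def by auto
  have L0: "Lp w (\<pi> 0) t = W 0 \<omega> + (W 1 \<omega> - W 0 \<omega>) * t"
    using Lp_eq[OF c01 t] unfolding lin_def w_def by simp
  have "(\<lambda>n. Lp w (\<pi> n) t - Lp w (\<pi> 0) t) \<longlonglongrightarrow> w t - Lp w (\<pi> 0) t"
    by (intro tendsto_diff Lp_converge[OF fr _ t] tendsto_const) (use cont in \<open>simp add: w_def\<close>)
  then show ?thesis unfolding sums_def ps L0 by (simp add: w_def algebra_simps)
qed

theorem mainTheorem9:
  fixes \<pi> :: "nat \<Rightarrow> real set" and M :: "'a measure" and W :: "real \<Rightarrow> 'a \<Rightarrow> real"
  assumes "finitely_refining \<pi>"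
    and "brownian_motion M W"
  shows "(AE \<omega> in M. \<forall>t\<in>{0..1}.
            (\<lambda>m. \<Sum>tr\<in>schauder_triples \<pi> m. eta W tr \<omega> * schauder_fun tr t)
              sums (W t \<omega> - W 0 \<omega> - (W 1 \<omega> - W 0 \<omega>) * t))
       \<and> prob_space.indep_vars M (\<lambda>_. borel) (\<lambda>(m, tr). eta W tr)
            (SIGMA m:UNIV. schauder_triples \<pi> m)
       \<and> (\<forall>i\<in>(SIGMA m:UNIV. schauder_triples \<pi> m).
            distributed M lborel ((\<lambda>(m, tr). eta W tr) i) std_normal_density)"
proof -
  interpret prob_space M using bm_prob_space[OF assms(2)] .
  have AEc: "AE \<omega> in M. continuous_on {0..1} (\<lambda>t. W t \<omega>)"
    using assms(2) unfolding brownian_motion_def by simp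
  have 1: "AE \<omega> in M. \<forall>t\<in>{0..1}.
            (\<lambda>m. \<Sum>tr\<in>schauder_triples \<pi> m. eta W tr \<omega> * schauder_fun tr t)
              sums (W t \<omega> - W 0 \<omega> - (W 1 \<omega> - W 0 \<omega>) * t)"
    using AEc
  proof eventually_elim
    case (elim \<omega>)
    show ?case using det_sums[where W=W and \<omega>=\<omega>, OF assms(1) elim] by auto
  qed
  have 2: "prob_space.indep_vars M (\<lambda>_. borel) (\<lambda>(m, tr). eta W tr) (SIGMA m:UNIV. schauder_triples \<pi> m)"
    by (rule eta_indep[OF assms])
  have 3: "\<forall>i\<in>(SIGMA m:UNIV. schauder_triples \<pi> m).
            distributed M lborel ((\<lambda>(m, tr). eta W tr) i) std_normal_density"
  proof
    fix i assume i: "i \<in> (SIGMA m:UNIV. schauder_triples \<pi> m)"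
    obtain m t1 t2 t3 where ie: "i = (m, (t1, t2, t3))" by (cases i) auto
    have tr: "(t1, t2, t3) \<in> schauder_triples \<pi> m" using i ie by auto
    note P = triple_props[OF assms(1) tr]
    show "distributed M lborel ((\<lambda>(m, tr). eta W tr) i) std_normal_density"
      unfolding ie using bm_eta[OF assms(2) P(1-4)] by simp
  qed
  show ?thesis using 1 2 3 by blast
qed

end
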